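(* Let $\operatorname{char}(k)\ne2$. For every term $\lambda$ over $X$, there exist $\alpha_i\in k$ and GDN supertableaux $\lambda_i$ over $X$ with $\ell(\lambda_i)=\ell(\lambda)$ and $r(\lambda_i)\ge r(\lambda)$ such that $\lambda=\sum_i\alpha_i\lambda_i$ in $\mathrm{GDN}_s(X)$. In particular $\mathrm{Tab}_s(X)$ spans $\mathrm{GDN}_s(X)$.
   Context: A GDN superalgebra is a superalgebra $\mathcal A=\mathcal A_0\oplus\mathcal A_1$ over a field $k$ (product $\circ$, $\mathcal A_i\circ\mathcal A_j\subseteq\mathcal A_{i+j}$ mod 2, $|x|=i$ for nonzero $x\in\mathcal A_i$) satisfying for homogeneous $x,y,z$: $x\circ(y\circ z)-(x\circ y)\circ z=(-1)^{|x||y|}(y\circ(x\circ z)-(y\circ x)\circ z)$ and $(x\circ y)\circ z=(-1)^{|y||z|}(x\circ z)\circ y$. $X=X_0\sqcup X_1$ is well-ordered, elements of $X_i$ have parity $i$, and $\mathrm{GDN}_s(X)$ is the free GDN superalgebra on $X$. Terms over $X$: letters of $X$ and products $(\mu\circ\nu)$ of terms, regarded as elements of $\mathrm{GDN}_s(X)$; length $\ell$ is the number of letters. $[\mu_1,\dots,\mu_n]_L=((\cdots(\mu_1\circ\mu_2)\cdots)\circ\mu_n)$, $[\mu_1,\dots,\mu_n]_R=(\mu_1\circ(\cdots\circ(\mu_{n-1}\circ\mu_n)\cdots))$; a simple term is $[a_1,\dots,a_n]_R$ with $a_i\in X$, $n\ge1$. Root number: $r(a)=0$ ($a\in X$), $r((\mu\circ\nu))=r(\mu)+1$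 if $\nu\in X$, else $r(\mu)+r(\nu)$. A GDN supertableau over $X$ is a term $\mu=[a,\mu_1,\dots,\mu_n]_L$ with $a\in X$, $n\ge0$, simple terms $\mu_i=[a_{i,r_i},\dots,a_{i,1}]_R$ of length $r_i\ge1$, such that: (i) $r_1\ge\dots\ge r_n$; (ii) if $r_i=r_{i+1}$ then $a_{i,1}\ge a_{i+1,1}$; (iii) $a\ge a_{1,r_1}\ge\dots\ge a_{1,2}\ge a_{2,r_2}\ge\dots\ge a_{2,2}\ge\dots\ge a_{n,r_n}\ge\dots\ge a_{n,2}$; (iv) among the letters of the chain in (iii), any two in different positions that both lie in $X_1$ are distinct; (v) if $a_{i,1},a_{i+1,1}\in X_1$ and $r_i=r_{i+1}$ then $a_{i,1}\ne a_{i+1,1}$. $\mathrm{Tab}_s(X)$ is the set of all GDN supertableaux. *)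

theory Defs
  imports Main
begin

text \<open>Terms over the alphabet X (type 'x, well-ordered). The parity of letters is
given by a function par :: 'x => bool (True means the letter lies in X_1).\<close>

datatype 'x gterm = Letter 'x | Mul "'x gterm" "'x gterm"

fun tlen :: "'x gterm \<Rightarrow> nat" where
  "tlen (Letter a) = 1"
| "tlen (Mul u v) = tlen u + tlen v"

fun tpar :: "('x \<Rightarrow> bool) \<Rightarrow> 'x gterm \<Rightarrow> bool" where
  "tpar par (Letter a) = par a"
| "tpar par (Mul u v) = (tpar par u \<noteq> tpar par v)"

fun root :: "'x gterm \<Rightarrow> nat" where
  "root (Letter a) = 0"
| "root (Mul u (Letter b)) = root u + 1"
| "root (Mul u (Mul v w)) = root u + root (Mul v w)"

definition sgn2 :: "('x \<Rightarrow> bool) \<Rightarrow> 'x gterm \<Rightarrow> 'x gterm \<Rightarrow> 'k::comm_ring_1" where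
  "sgn2 par x y = (if tpar par x \<and> tpar par y then -1 else 1)"

text \<open>Elements of the free nonassociative superalgebra are represented by finite
formal linear combinations (lists of coefficient/term pairs).  The ideal of
relations defining GDN_s(X) is the two-sided ideal generated by all instances of
the two super-identities on terms (terms are homogeneous monomials, and the
identities are multilinear, so this is the full T-ideal of GDN superalgebras).\<close>

definition lc_coeff :: "('k::comm_ring_1 \<times> 'x gterm) list \<Rightarrow> 'x gterm \<Rightarrow> 'k" where
  "lc_coeff L t = sum_list (map fst (filter (\<lambda>p. snd p = t) L))"

inductive gdn_rel :: "('x \<Rightarrow> bool) \<Rightarrow> ('k::comm_ring_1 \<times> 'x gterm) list \<Rightarrow> bool"
  for par :: "'x \<Rightarrow> bool" where
  ident1: "gdn_rel par
     [(1, Mul x (Mul y z)), (-1, Mul (Mul x y) z),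
      (- sgn2 par x y, Mul y (Mul x z)), (sgn2 par x y, Mul (Mul y x) z)]"
| ident2: "gdn_rel par [(1, Mul (Mul x y) z), (- sgn2 par y z, Mul (Mul x z) y)]"
| zero: "gdn_rel par []"
| add: "gdn_rel par a \<Longrightarrow> gdn_rel par b \<Longrightarrow> gdn_rel par (a @ b)"
| smult: "gdn_rel par a \<Longrightarrow> gdn_rel par (map (\<lambda>(c, t). (\<alpha> * c, t)) a)"
| mult_left: "gdn_rel par a \<Longrightarrow> gdn_rel par (map (\<lambda>(c, t). (c, Mul u t)) a)"
| mult_right: "gdn_rel par a \<Longrightarrow> gdn_rel par (map (\<lambda>(c, t). (c, Mul t u)) a)"
| cong: "gdn_rel par a \<Longrightarrow> (\<And>t. lc_coeff a t = lc_coeff b t) \<Longrightarrow> gdn_rel par b"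

definition gdn_eq :: "('x \<Rightarrow> bool) \<Rightarrow> ('k::comm_ring_1 \<times> 'x gterm) list
    \<Rightarrow> ('k \<times> 'x gterm) list \<Rightarrow> bool" where
  "gdn_eq par a b = gdn_rel par (a @ map (\<lambda>(c, t). (- c, t)) b)"

fun rnest :: "'x list \<Rightarrow> 'x gterm" where
  "rnest [b] = Letter b"
| "rnest (b # c # cs) = Mul (Letter b) (rnest (c # cs))"

definition lnest :: "'x \<Rightarrow> 'x gterm list \<Rightarrow> 'x gterm" where
  "lnest a mus = foldl Mul (Letter a) mus"

text \<open>The simple term mu_i = [a_{i,r_i},...,a_{i,1}]_R is encoded
by the list ws ! i = [a_{i,r_i},...,a_{i,1}] (written order), so r_i = length (ws!i),
a_{i,1} = last (ws!i), and a_{i,r_i},...,a_{i,2} is butlast (ws!i).\<close>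
definition is_tableau :: "('x::linorder \<Rightarrow> bool) \<Rightarrow> 'x gterm \<Rightarrow> bool" where
  "is_tableau par t \<longleftrightarrow> (\<exists>a ws.
     t = lnest a (map rnest ws) \<and>
     (\<forall>i < length ws. ws ! i \<noteq> []) \<and>
     (\<forall>i. Suc i < length ws \<longrightarrow> length (ws ! i) \<ge> length (ws ! Suc i)) \<and>
     (\<forall>i. Suc i < length ws \<longrightarrow> length (ws ! i) = length (ws ! Suc i) \<longrightarrow>
            last (ws ! i) \<ge> last (ws ! Suc i)) \<and>
     (let c = a # concat (map butlast ws) in
        (\<forall>j. Suc j < length c \<longrightarrow> c ! j \<ge> c ! Suc j) \<and>
        (\<forall>i j. i < length c \<longrightarrow> j < length c \<longrightarrow> i \<noteq> j \<longrightarrow> par (c ! i) \<longrightarrow> par (c ! j)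
               \<longrightarrow> c ! i \<noteq> c ! j)) \<and>
     (\<forall>i. Suc i < length ws \<longrightarrow> par (last (ws ! i)) \<longrightarrow> par (last (ws ! Suc i)) \<longrightarrow>
            length (ws ! i) = length (ws ! Suc i) \<longrightarrow> last (ws ! i) \<noteq> last (ws ! Suc i)))"

definition Tab :: "('x::linorder \<Rightarrow> bool) \<Rightarrow> 'x gterm set" where
  "Tab par = {t. is_tableau par t}"

end

theory Submission
  imports Defs "HOL-Library.Product_Lexorder" "HOL-Library.Multiset"
begin

definition neg :: "('k::comm_ring_1 \<times> 'x gterm) list \<Rightarrow> ('k \<times> 'x gterm) list" where
  "neg L = map (\<lambda>(c, t). (- c, t)) L"
definition sm :: "'k::comm_ring_1 \<Rightarrow> ('k \<times> 'x gterm) list \<Rightarrow> ('k \<times> 'x gterm) list" where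
  "sm \<alpha> L = map (\<lambda>(c, t). (\<alpha> * c, t)) L"
definition cmap :: "('x gterm \<Rightarrow> 'x gterm) \<Rightarrow> ('k::comm_ring_1 \<times> 'x gterm) list \<Rightarrow> ('k \<times> 'x gterm) list" where
  "cmap f L = map (\<lambda>(c, t). (c, f t)) L"

lemma lc_append[simp]: "lc_coeff (a @ b) t = lc_coeff a t + lc_coeff b t"
  by (simp add: lc_coeff_def)
lemma lc_nil[simp]: "lc_coeff [] t = 0" by (simp add: lc_coeff_def)
lemma lc_cons[simp]: "lc_coeff ((c,u) # a) t = (if u = t then c else 0) + lc_coeff a t"
  by (simp add: lc_coeff_def)
lemma lc_neg[simp]: "lc_coeff (neg a) t = - lc_coeff a t"
  by (induction a) (auto simp: neg_def)
lemma lc_sm[simp]: "lc_coeff (sm \<alpha> a) t = \<alpha> * lc_coeff a t"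
  by (induction a) (auto simp: sm_def algebra_simps)

lemma neg_append[simp]: "neg (a @ b) = neg a @ neg b" by (simp add: neg_def)
lemma sm_append[simp]: "sm c (a @ b) = sm c a @ sm c b" by (simp add: sm_def)
lemma cmap_append[simp]: "cmap f (a @ b) = cmap f a @ cmap f b" by (simp add: cmap_def)
lemma neg_cons[simp]: "neg ((c,t)#a) = (-c,t) # neg a" by (simp add: neg_def)
lemma sm_cons[simp]: "sm \<alpha> ((c,t)#a) = (\<alpha>*c,t) # sm \<alpha> a" by (simp add: sm_def)
lemma cmap_cons[simp]: "cmap f ((c,t)#a) = (c,f t) # cmap f a" by (simp add: cmap_def)
lemma neg_nil[simp]: "neg [] = []" by (simp add: neg_def)
lemma sm_nil[simp]: "sm c [] = []" by (simp add: sm_def)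
lemma cmap_nil[simp]: "cmap f [] = []" by (simp add: cmap_def)
lemma cmap_neg: "cmap f (neg a) = neg (cmap f a)" by (induction a) auto
lemma cmap_sm: "cmap f (sm c a) = sm c (cmap f a)" by (induction a) auto
lemma cmap_comp: "cmap f (cmap g a) = cmap (f \<circ> g) a" by (induction a) auto
lemma set_cmap: "p \<in> set (cmap f a) \<Longrightarrow> \<exists>q\<in>set a. fst p = fst q \<and> snd p = f (snd q)"
  by (induction a) auto
lemma set_neg: "p \<in> set (neg a) \<Longrightarrow> \<exists>q\<in>set a. snd p = snd q"
  by (induction a) auto
lemma set_sm: "p \<in> set (sm c a) \<Longrightarrow> \<exists>q\<in>set a. snd p = snd q"
  by (induction a) auto

lemma rel_cong: "gdn_rel par a \<Longrightarrow> (\<And>t. lc_coeff a t = lc_coeff b t) \<Longrightarrow> gdn_rel par b"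
  by (rule gdn_rel.cong)

lemma rel_sm: "gdn_rel par a \<Longrightarrow> gdn_rel par (sm c a)"
  unfolding sm_def by (rule gdn_rel.smult)

lemma rel_neg: "gdn_rel par a \<Longrightarrow> gdn_rel par (neg a)"
  by (rule rel_cong[OF rel_sm[where c="-1"]]) auto

lemma rel_ml: "gdn_rel par a \<Longrightarrow> gdn_rel par (cmap (Mul u) a)"
  unfolding cmap_def by (rule gdn_rel.mult_left)
lemma rel_mr: "gdn_rel par a \<Longrightarrow> gdn_rel par (cmap (\<lambda>t. Mul t u) a)"
  unfolding cmap_def by (rule gdn_rel.mult_right)

inductive ctx :: "('x gterm \<Rightarrow> 'x gterm) \<Rightarrow> bool" where
  ctx_id: "ctx (\<lambda>t. t)"
| ctx_l: "ctx f \<Longrightarrow> ctx (\<lambda>t. Mul u (f t))"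
| ctx_r: "ctx f \<Longrightarrow> ctx (\<lambda>t. Mul (f t) u)"

lemma rel_ctx: "ctx f \<Longrightarrow> gdn_rel par L \<Longrightarrow> gdn_rel par (cmap f L)"
proof (induction f arbitrary: L rule: ctx.induct)
  case ctx_id then show ?case by (simp add: cmap_def)
next
  case (ctx_l f u)
  have "gdn_rel par (cmap (Mul u) (cmap f L))" using ctx_l by (intro rel_ml) auto
  then show ?case by (simp add: cmap_comp o_def)
next
  case (ctx_r f u)
  have "gdn_rel par (cmap (\<lambda>t. Mul t u) (cmap f L))" using ctx_r by (intro rel_mr) auto
  then show ?case by (simp add: cmap_comp o_def)
qed

lemma ctx_comp: "ctx f \<Longrightarrow> ctx g \<Longrightarrow> ctx (\<lambda>t. f (g t))"
  by (induction f rule: ctx.induct) (auto intro: ctx.intros)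

lemma gdn_eq_def2: "gdn_eq par a b = gdn_rel par (a @ neg b)"
  by (simp add: gdn_eq_def neg_def)

lemma eq_lc: "(\<And>t. lc_coeff a t = lc_coeff b t) \<Longrightarrow> gdn_eq par a b"
  unfolding gdn_eq_def2 by (rule rel_cong[OF gdn_rel.zero]) simp

lemma eq_refl[simp]: "gdn_eq par a a" by (rule eq_lc) simp

lemma eq_sym: "gdn_eq par a b \<Longrightarrow> gdn_eq par b a"
  unfolding gdn_eq_def2 by (rule rel_cong[OF rel_neg]) auto

lemma eq_trans: "gdn_eq par a b \<Longrightarrow> gdn_eq par b c \<Longrightarrow> gdn_eq par a c"
  unfolding gdn_eq_def2 by (rule rel_cong[OF gdn_rel.add[of par "a @ neg b" "b @ neg c"]]) auto

lemma eq_add: "gdn_eq par a b \<Longrightarrow> gdn_eq par c d \<Longrightarrow> gdn_eq par (a @ c) (b @ d)"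
  unfolding gdn_eq_def2 by (rule rel_cong[OF gdn_rel.add[of par "a @ neg b" "c @ neg d"]]) auto

lemma eq_sm: "gdn_eq par a b \<Longrightarrow> gdn_eq par (sm c a) (sm c b)"
  unfolding gdn_eq_def2 by (rule rel_cong[OF rel_sm[of par "a @ neg b" c]]) (auto simp: algebra_simps)

lemma eq_ctx: "ctx f \<Longrightarrow> gdn_eq par a b \<Longrightarrow> gdn_eq par (cmap f a) (cmap f b)"
  unfolding gdn_eq_def2 using rel_ctx[of f par "a @ neg b"] by (simp add: cmap_neg)

lemma eq_of_rel: "gdn_rel par a \<Longrightarrow> (\<And>t. lc_coeff a t = lc_coeff b t - lc_coeff c t) \<Longrightarrow> gdn_eq par b c"
  unfolding gdn_eq_def2 by (rule rel_cong) auto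

definition inspan :: "('x \<Rightarrow> bool) \<Rightarrow> 'x gterm set \<Rightarrow> ('k::comm_ring_1 \<times> 'x gterm) list \<Rightarrow> bool" where
  "inspan par S a \<longleftrightarrow> (\<exists>M. (\<forall>p\<in>set M. snd p \<in> S) \<and> gdn_eq par a M)"

lemma inspan_nil[simp]: "inspan par S []"
  unfolding inspan_def by (rule exI[of _ "[]"]) simp

lemma inspan_mem: "t \<in> S \<Longrightarrow> inspan par S [(c,t)]"
  unfolding inspan_def by (rule exI[of _ "[(c,t)]"]) simp

lemma inspan_eq: "gdn_eq par a b \<Longrightarrow> inspan par S b \<Longrightarrow> inspan par S a"
  unfolding inspan_def by (blast intro: eq_trans)

lemma inspan_lc: "(\<And>t. lc_coeff a t = lc_coeff b t) \<Longrightarrow> inspan par S b \<Longrightarrow> inspan par S a"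
  by (rule inspan_eq[OF eq_lc])

lemma inspan_append: "inspan par S a \<Longrightarrow> inspan par S b \<Longrightarrow> inspan par S (a @ b)"
  unfolding inspan_def by (metis (no_types, lifting) Un_iff eq_add set_append)

lemma inspan_sm: "inspan par S a \<Longrightarrow> inspan par S (sm c a)"
  unfolding inspan_def by (fastforce intro: eq_sm dest: set_sm)

lemma inspan_neg: "inspan par S a \<Longrightarrow> inspan par S (neg a)"
  by (rule inspan_lc[OF _ inspan_sm[where c="-1"]]) auto

lemma inspan_cons: "inspan par S [(c,t)] \<Longrightarrow> inspan par S a \<Longrightarrow> inspan par S ((c,t) # a)"
  using inspan_append[of par S "[(c,t)]" a] by simp

lemma inspan_single: fixes c :: "'k::comm_ring_1" shows "inspan par S [(1::'k,t)] \<Longrightarrow> inspan par S [(c,t)]"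
  by (rule inspan_lc[OF _ inspan_sm[where c=c and a="[(1::'k,t)]"]]) auto

lemma inspan_mono: "inspan par S a \<Longrightarrow> S \<subseteq> T \<Longrightarrow> inspan par T a"
  unfolding inspan_def by blast

lemma inspan_trans_aux: fixes M :: "('k::comm_ring_1 \<times> 'x gterm) list" shows "(\<forall>p\<in>set M. snd p \<in> S) \<Longrightarrow> (\<And>t. t \<in> S \<Longrightarrow> inspan par T [(1::'k,t)]) \<Longrightarrow> inspan par T M"
proof (induction M)
  case Nil then show ?case by simp
next
  case (Cons p M)
  obtain c t where p: "p = (c,t)" by (cases p)
  show ?case unfolding p
    by (rule inspan_cons) (use Cons p in \<open>auto intro: inspan_single\<close>)
qed

lemma inspan_trans: fixes a :: "('k::comm_ring_1 \<times> 'x gterm) list" shows "inspan par S a \<Longrightarrow> (\<And>t. t \<in> S \<Longrightarrow> inspan par T [(1::'k,t)]) \<Longrightarrow> inspan par T a"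
  unfolding inspan_def[of par S] using inspan_trans_aux inspan_eq by metis

lemma inspan_solve:
  fixes c :: "'k::field"
  assumes "gdn_rel par ((c,t) # R)" "c \<noteq> 0" "inspan par S R"
  shows "inspan par S [(1::'k,t)]"
proof -
  have "inspan par S (sm (- inverse c) R)" by (rule inspan_sm[OF assms(3)])
  moreover have "gdn_eq par [(1::'k,t)] (sm (- inverse c) R)"
  proof -
    have "gdn_rel par (sm (inverse c) ((c,t) # R))" by (rule rel_sm[OF assms(1)])
    then show ?thesis unfolding gdn_eq_def2
      by (rule rel_cong) (use assms(2) in \<open>auto simp: algebra_simps\<close>)
  qed
  ultimately show ?thesis by (rule inspan_eq[rotated])
qed

lemma inspan_ctx_single:
  fixes par :: "'x \<Rightarrow> bool" and T :: "'x gterm set" and t :: "'x gterm"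
  assumes "ctx f" "inspan par S [(1::'k::comm_ring_1,t)]" "\<And>u. u \<in> S \<Longrightarrow> inspan par T [(1::'k, f u)]"
  shows "inspan par T [(1::'k, f t)]"
proof -
  obtain M where M: "\<forall>p\<in>set M. snd p \<in> S" "gdn_eq par [(1::'k,t)] M" using assms(2) unfolding inspan_def by blast
  have "gdn_eq par [(1::'k, f t)] (cmap f M)" using eq_ctx[OF assms(1) M(2)] by simp
  moreover have "inspan par T (cmap f M)"
    using M(1) proof (induction M)
    case Nil then show ?case by simp
  next
    case (Cons p M)
    obtain c u where p: "p = (c,u)" by (cases p)
    have "inspan par T [(1::'k, f u)]" using Cons.prems p assms(3) by auto
    then have "inspan par T [(c, f u)]" by (rule inspan_single)
    moreover have "inspan par T (cmap f M)" using Cons by auto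
    ultimately show ?case unfolding p by (simp add: inspan_cons)
  qed
  ultimately show ?thesis by (rule inspan_eq)
qed

lemma root_Mul_pos: "root (Mul u v) \<ge> 1"
proof (induction v arbitrary: u)
  case (Mul v1 v2)
  have "1 \<le> root (Mul v1 v2)" by (rule Mul.IH(2))
  then show ?case by simp
qed simp

lemma root_Mul: "root (Mul u v) = root u + max 1 (root v)"
proof (cases v)
  case (Mul x y)
  then show ?thesis using root_Mul_pos[of x y] by (simp add: max_def)
qed auto

lemma tlen_pos: "tlen t > 0"
  by (induction t) auto

lemma root_lt_tlen: "root t < tlen t"
proof (induction t)
  case (Letter x) then show ?case by simp
next
  case (Mul u v)
  have "tlen v \<ge> 1" using tlen_pos[of v] by simp
  then show ?case using Mul by (simp add: root_Mul)
qed

lemma root_foldl: "root (foldl Mul u ts) = root u + sum_list (map (\<lambda>t. max 1 (root t)) ts)"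
  by (induction ts arbitrary: u) (auto simp: root_Mul)

lemma tlen_foldl: "tlen (foldl Mul u ts) = tlen u + sum_list (map tlen ts)"
  by (induction ts arbitrary: u) auto

lemma tpar_foldl: "tpar par (foldl Mul u (ts @ [t])) = (tpar par (foldl Mul u ts) \<noteq> tpar par t)"
  by simp

lemma rnest_tlen: "w \<noteq> [] \<Longrightarrow> tlen (rnest w) = length w"
  by (induction w rule: rnest.induct) auto

lemma rnest_root: "w \<noteq> [] \<Longrightarrow> root (rnest w) = (if length w = 1 then 0 else 1)"
proof (induction w rule: rnest.induct)
  case (2 b c cs)
  then show ?case by (cases cs) (auto simp: root_Mul)
qed auto

lemma rnest_max1: "w \<noteq> [] \<Longrightarrow> max 1 (root (rnest w)) = 1"
  by (simp add: rnest_root)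

lemma rnest_max1': "w \<noteq> [] \<Longrightarrow> max (Suc 0) (root (rnest w)) = Suc 0"
  by (simp add: rnest_root)

definition form :: "'x \<Rightarrow> 'x list list \<Rightarrow> 'x gterm" where
  "form a ws = lnest a (map rnest ws)"

lemma sum_list_const1: "(\<forall>w\<in>set ws. w \<noteq> []) \<Longrightarrow> sum_list (map (\<lambda>w. max (Suc 0) (root (rnest w))) ws) = length ws"
  by (induction ws) (auto simp: rnest_max1')

lemma root_form: "(\<forall>w\<in>set ws. w \<noteq> []) \<Longrightarrow> root (form a ws) = length ws"
  unfolding form_def lnest_def by (simp add: root_foldl o_def sum_list_const1)

lemma sum_list_tlen: "(\<forall>w\<in>set ws. w \<noteq> []) \<Longrightarrow> sum_list (map (\<lambda>w. tlen (rnest w)) ws) = sum_list (map length ws)"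
  by (induction ws) (simp_all add: rnest_tlen)

lemma tlen_form: "(\<forall>w\<in>set ws. w \<noteq> []) \<Longrightarrow> tlen (form a ws) = 1 + sum_list (map length ws)"
  unfolding form_def lnest_def by (simp add: tlen_foldl o_def sum_list_tlen)

definition rctx :: "'x list \<Rightarrow> 'x gterm \<Rightarrow> 'x gterm" where
  "rctx P t = foldr (\<lambda>p t. Mul (Letter p) t) P t"

lemma rnest_append: "X \<noteq> [] \<Longrightarrow> rnest (P @ X) = rctx P (rnest X)"
proof (induction P)
  case Nil then show ?case by (simp add: rctx_def)
next
  case (Cons p P)
  then show ?case by (cases "P @ X") (auto simp: rctx_def)
qed

lemma ctx_rctx: "ctx (rctx P)"
proof (induction P)
  case Nil then show ?case by (simp add: rctx_def ctx_id)
next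
  case (Cons p P)
  have "ctx (\<lambda>t. Mul (Letter p) (rctx P t))" by (rule ctx_l[OF Cons])
  then show ?case by (simp add: rctx_def)
qed

lemma root_rctx: "root t \<ge> 1 \<Longrightarrow> root (rctx P t) = root t"
  by (induction P) (auto simp: rctx_def root_Mul)

lemma tlen_rctx: "tlen (rctx P t) = length P + tlen t"
  by (induction P) (auto simp: rctx_def)

lemma ctx_foldl: "ctx f \<Longrightarrow> ctx (\<lambda>t. foldl Mul (f t) B)"
proof (induction B arbitrary: f)
  case Nil then show ?case by simp
next
  case (Cons b B)
  have "ctx (\<lambda>t. Mul (f t) b)" by (rule ctx_r[OF Cons.prems])
  from Cons.IH[OF this] show ?case by simp
qed

lemma ctx_slot: "ctx (\<lambda>m. foldl Mul x (A @ m # B))"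
proof -
  have "ctx (\<lambda>m. Mul (foldl Mul x A) m)" by (rule ctx_l[OF ctx_id])
  from ctx_foldl[OF this, of B] show ?thesis by simp
qed

definition sg :: "bool \<Rightarrow> 'k::comm_ring_1" where
  "sg b = (if b then -1 else 1)"

lemma sg_mult: "sg a * sg b = (sg (a \<noteq> b) :: 'k::comm_ring_1)"
  by (simp add: sg_def)
lemma sg_sq[simp]: "sg a * sg a = (1 :: 'k::comm_ring_1)"
  by (simp add: sg_def)
lemma sg_False[simp]: "sg False = 1" by (simp add: sg_def)
lemma sg_True[simp]: "sg True = -1" by (simp add: sg_def)

lemma sgn2_sg: "sgn2 par x y = sg (tpar par x \<and> tpar par y)"
  by (simp add: sgn2_def sg_def)

definition mh :: "('x \<Rightarrow> bool) \<Rightarrow> 'x gterm set \<Rightarrow> 'x gterm \<Rightarrow> 'k::comm_ring_1 \<Rightarrow> 'x gterm \<Rightarrow> bool" where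
  "mh par S t c t' \<longleftrightarrow> inspan par S [(1,t),(-c,t')]"

lemma mh_use:
  fixes c :: "'k::comm_ring_1"
  assumes "mh par S t c t'" "inspan par T [(1::'k,t')]" "S \<subseteq> T"
  shows "inspan par T [(1::'k,t)]"
proof -
  have "inspan par T [(c,t')]" using assms(2) by (rule inspan_single)
  moreover have "inspan par T [(1,t),(-c,t')]" using assms(1,3) unfolding mh_def by (rule inspan_mono)
  ultimately have "inspan par T ([(1,t),(-c,t')] @ [(c,t')])" using inspan_append by blast
  then show ?thesis by (rule inspan_lc[rotated]) auto
qed

lemma mh_self:
  fixes t :: "'x gterm"
  assumes "mh par S t (-1::'k::field) t" "(2::'k) \<noteq> 0"
  shows "inspan par S [(1::'k,t)]"
proof -
  have "inspan par S (sm (inverse 2) [(1::'k,t),(1,t)])"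
    using assms(1) by (intro inspan_sm) (simp add: mh_def)
  then show ?thesis by (rule inspan_lc[rotated]) (use assms(2) in \<open>auto simp: field_simps\<close>)
qed

lemma mh_trans:
  fixes c :: "'k::comm_ring_1"
  assumes "mh par S t c t'" "mh par S t' d t''"
  shows "mh par S t (c*d) t''"
proof -
  have "inspan par S ([(1,t),(-c,t')] @ sm c [(1,t'),(-d,t'')])"
    using assms by (intro inspan_append inspan_sm) (auto simp: mh_def)
  then show ?thesis unfolding mh_def by (rule inspan_lc[rotated]) auto
qed

lemma mh_sym:
  fixes c :: "'k::comm_ring_1"
  assumes "mh par S t c t'" "c * c = 1"
  shows "mh par S t' c t"
proof -
  have "inspan par S (sm (-c) [(1,t),(-c,t')])"
    using assms by (intro inspan_sm) (auto simp: mh_def)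
  then show ?thesis unfolding mh_def by (rule inspan_lc[rotated]) (use assms(2) in \<open>auto simp: algebra_simps\<close>)
qed

lemma mh_refl: "mh par S t (1::'k::comm_ring_1) t"
  unfolding mh_def by (rule inspan_lc[OF _ inspan_nil]) auto

lemma mh_mono: "mh par S t c t' \<Longrightarrow> S \<subseteq> T \<Longrightarrow> mh par T t c t'"
  unfolding mh_def by (rule inspan_mono)

lemma mh_of_rel:
  fixes e :: "'k::comm_ring_1"
  assumes "gdn_rel par ((1,t) # (e,t') # R)" "\<forall>p\<in>set R. snd p \<in> S"
  shows "mh par S t (-e) t'"
proof -
  have "gdn_eq par [(1,t),(e,t')] (neg R)"
    unfolding gdn_eq_def2 by (rule rel_cong[OF assms(1)]) (simp add: neg_def o_def case_prod_unfold)
  moreover have "inspan par S (neg R)"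
    unfolding inspan_def using assms(2) by (metis eq_refl set_neg)
  ultimately show ?thesis unfolding mh_def by (simp add: inspan_eq)
qed

definition Hi :: "nat \<Rightarrow> nat \<Rightarrow> 'x gterm set" where
  "Hi N r = {u. tlen u = N \<and> r < root u}"

lemma mh_of_rel':
  fixes e :: "'k::comm_ring_1"
  assumes "gdn_rel par L" "\<And>x. lc_coeff L x = lc_coeff ((1,t) # (e,t') # R) x" "\<forall>p\<in>set R. snd p \<in> S"
  shows "mh par S t (-e) t'"
  by (rule mh_of_rel[OF rel_cong[OF assms(1)] assms(3)]) (use assms(2) in simp)

lemma mh_of_rel2:
  fixes c :: "'k::comm_ring_1"
  assumes "gdn_rel par L" "\<And>x. lc_coeff L x = lc_coeff ((1,t) # (-c,t') # R) x" "\<forall>p\<in>set R. snd p \<in> S"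
  shows "mh par S t c t'"
  using mh_of_rel'[OF assms] by simp

lemma swap_adj_rel:
  "gdn_rel par [(1::'k::comm_ring_1, foldl Mul x (A @ mu # nu # B)), (- sgn2 par mu nu, foldl Mul x (A @ nu # mu # B))]"
proof -
  have "gdn_rel par [(1::'k, Mul (Mul (foldl Mul x A) mu) nu), (- sgn2 par mu nu, Mul (Mul (foldl Mul x A) nu) mu)]"
    by (rule gdn_rel.ident2)
  from rel_ctx[OF ctx_foldl[OF ctx_id, of B] this] show ?thesis by simp
qed

lemma form_swap_rows:
  "mh par S (form a (A @ v # w # B)) (sgn2 par (rnest v) (rnest w) :: 'k::comm_ring_1) (form a (A @ w # v # B))"
proof -
  have "gdn_rel par [(1::'k, foldl Mul (Letter a) (map rnest A @ rnest v # rnest w # map rnest B)),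
       (- sgn2 par (rnest v) (rnest w), foldl Mul (Letter a) (map rnest A @ rnest w # rnest v # map rnest B))]"
    by (rule swap_adj_rel)
  from mh_of_rel[OF this, of S] show ?thesis by (simp add: form_def lnest_def)
qed

lemma nonempty_rows_append: "(\<forall>w\<in>set (A @ B). w \<noteq> []) = ((\<forall>w\<in>set A. w \<noteq> []) \<and> (\<forall>w\<in>set B. w \<noteq> []))"
  by auto

lemma head_swap:
  assumes ne: "\<forall>w\<in>set ws. w \<noteq> []" and S: "S \<noteq> []"
  shows "mh par (Hi (tlen (form a ((b # S) # ws))) (Suc (length ws)))
            (form a ((b # S) # ws)) (sgn2 par (Letter a) (Letter b) :: 'k::comm_ring_1) (form b ((a # S) # ws))"
proof -
  let ?f = "\<lambda>m. foldl Mul m (map rnest ws)"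
  let ?z = "rnest S"
  let ?s = "sgn2 par (Letter a) (Letter b) :: 'k"
  have r: "gdn_rel par [(1::'k, Mul (Letter a) (Mul (Letter b) ?z)), (-1, Mul (Mul (Letter a) (Letter b)) ?z),
      (- ?s, Mul (Letter b) (Mul (Letter a) ?z)), (?s, Mul (Mul (Letter b) (Letter a)) ?z)]"
    by (rule gdn_rel.ident1)
  note r2 = rel_ctx[OF ctx_foldl[OF ctx_id, of "map rnest ws"] r]
  have rb: "rnest (x # S) = Mul (Letter x) ?z" for x using S by (cases S) auto
  have fa: "form x ((y # S) # ws) = ?f (Mul (Letter x) (Mul (Letter y) ?z))" for x y
    by (simp add: form_def lnest_def rb)
  have tl: "tlen (?f (Mul (Mul (Letter x) (Letter y)) ?z)) = tlen (form a ((b # S) # ws))" for x y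
    using ne S by (simp add: tlen_foldl tlen_form rnest_tlen o_def sum_list_tlen)
  have rt: "root (?f (Mul (Mul (Letter x) (Letter y)) ?z)) = Suc (Suc (length ws))" for x y
    using ne S by (simp add: root_foldl o_def sum_list_const1 root_Mul rnest_root)
  show ?thesis
    apply (rule mh_of_rel2[OF r2, where R="[(-1, ?f (Mul (Mul (Letter a) (Letter b)) ?z)), (?s, ?f (Mul (Mul (Letter b) (Letter a)) ?z))]"])
    using tl rt by (auto simp: fa Hi_def)
qed

lemma row_swap_letters:
  assumes ne: "\<forall>w\<in>set (A @ B). w \<noteq> []" and S: "S \<noteq> []"
  shows "mh par (Hi (tlen (form a (A @ (P @ x # y # S) # B))) (Suc (length A + length B)))
            (form a (A @ (P @ x # y # S) # B)) (sgn2 par (Letter x) (Letter y) :: 'k::comm_ring_1)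
            (form a (A @ (P @ y # x # S) # B))"
proof -
  let ?f = "\<lambda>m. foldl Mul (Letter a) (map rnest A @ rctx P m # map rnest B)"
  let ?z = "rnest S"
  let ?s = "sgn2 par (Letter x) (Letter y) :: 'k"
  have r: "gdn_rel par [(1::'k, Mul (Letter x) (Mul (Letter y) ?z)), (-1, Mul (Mul (Letter x) (Letter y)) ?z),
      (- ?s, Mul (Letter y) (Mul (Letter x) ?z)), (?s, Mul (Mul (Letter y) (Letter x)) ?z)]"
    by (rule gdn_rel.ident1)
  note r2 = rel_ctx[OF ctx_comp[OF ctx_slot[of "Letter a" "map rnest A" "map rnest B"] ctx_rctx[of P]] r]
  have rb: "rnest (P @ u # v # S) = rctx P (Mul (Letter u) (Mul (Letter v) ?z))" for u v
    using S by (subst rnest_append) (auto, cases S, auto)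
  have fa: "form a (A @ (P @ u # v # S) # B) = ?f (Mul (Letter u) (Mul (Letter v) ?z))" for u v
    by (simp add: form_def lnest_def rb)
  have tl: "tlen (?f (Mul (Mul (Letter u) (Letter v)) ?z)) = tlen (form a (A @ (P @ x # y # S) # B))" for u v
    using ne S by (simp add: tlen_foldl tlen_form rnest_tlen o_def sum_list_tlen tlen_rctx)
  have rt: "root (?f (Mul (Mul (Letter u) (Letter v)) ?z)) = Suc (Suc (length A + length B))" for u v
  proof -
    have "root (rctx P (Mul (Mul (Letter u) (Letter v)) ?z)) = 2"
      using S by (subst root_rctx) (auto simp: root_Mul rnest_root)
    then show ?thesis using ne by (simp add: root_foldl o_def sum_list_const1 root_Mul)
  qed
  show ?thesis
    apply (rule mh_of_rel2[OF r2, where R="[(-1, ?f (Mul (Mul (Letter x) (Letter y)) ?z)), (?s, ?f (Mul (Mul (Letter y) (Letter x)) ?z))]"])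
    using tl rt by (auto simp: fa Hi_def)
qed

fun plist :: "('x \<Rightarrow> bool) \<Rightarrow> 'x list \<Rightarrow> bool" where
  "plist par [] = False"
| "plist par (x # xs) = (par x \<noteq> plist par xs)"

lemma plist_append[simp]: "plist par (xs @ ys) = (plist par xs \<noteq> plist par ys)"
  by (induction xs) auto

lemma tpar_rnest: "w \<noteq> [] \<Longrightarrow> tpar par (rnest w) = plist par w"
  by (induction w rule: rnest.induct) auto

definition eqv :: "('x \<Rightarrow> bool) \<Rightarrow> 'x gterm set \<Rightarrow> 'x gterm \<Rightarrow> 'x gterm \<Rightarrow> 'k::comm_ring_1 itself \<Rightarrow> bool" where
  "eqv par S t t' K \<longleftrightarrow> (\<exists>s::'k. s * s = 1 \<and> mh par S t s t')"

lemma eqv_of_mh: "mh par S t (s::'k::comm_ring_1) t' \<Longrightarrow> s * s = 1 \<Longrightarrow> eqv par S t t' TYPE('k)"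
  unfolding eqv_def by blast

lemma eqv_sg: "mh par S t (sg b::'k::comm_ring_1) t' \<Longrightarrow> eqv par S t t' TYPE('k)"
  by (rule eqv_of_mh) auto

lemma eqv_sgn2: "mh par S t (sgn2 par x y::'k::comm_ring_1) t' \<Longrightarrow> eqv par S t t' TYPE('k)"
  by (rule eqv_of_mh) (auto simp: sgn2_def)

lemma eqv_refl: "eqv par S t t TYPE('k::comm_ring_1)"
  using eqv_of_mh[OF mh_refl] by simp

lemma eqv_sym: "eqv par S t t' TYPE('k::comm_ring_1) \<Longrightarrow> eqv par S t' t TYPE('k)"
  unfolding eqv_def using mh_sym by blast

lemma eqv_trans: "eqv par S t t' TYPE('k::comm_ring_1) \<Longrightarrow> eqv par S t' t'' TYPE('k) \<Longrightarrow> eqv par S t t'' TYPE('k)"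
  unfolding eqv_def
proof (elim exE conjE)
  fix s s' :: 'k
  assume "s * s = 1" "mh par S t s t'" "s' * s' = 1" "mh par S t' s' t''"
  then show "\<exists>s::'k. s * s = 1 \<and> mh par S t s t''"
  proof (intro exI[of _ "s * s'"] conjI)
    show "s * s' * (s * s') = 1" using \<open>s * s = 1\<close> \<open>s' * s' = 1\<close> by (simp add: algebra_simps)
    show "mh par S t (s * s') t''" by (rule mh_trans) fact+
  qed
qed

lemma eqv_use: "eqv par S t t' TYPE('k::comm_ring_1) \<Longrightarrow> inspan par T [(1::'k,t')] \<Longrightarrow> S \<subseteq> T \<Longrightarrow> inspan par T [(1::'k,t)]"
  unfolding eqv_def using mh_use by blast

lemma eqv_mono: "eqv par S t t' K \<Longrightarrow> S \<subseteq> T \<Longrightarrow> eqv par T t t' K"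
  unfolding eqv_def using mh_mono by blast

lemma row_move:
  "eqv par S (form a (A @ v # C @ D)) (form a (A @ C @ v # D)) TYPE('k::comm_ring_1)"
proof (induction C arbitrary: A)
  case Nil then show ?case by (simp add: eqv_refl)
next
  case (Cons c C)
  have "eqv par S (form a (A @ v # c # C @ D)) (form a (A @ c # v # C @ D)) TYPE('k)"
    by (rule eqv_sgn2[OF form_swap_rows])
  moreover have "eqv par S (form a ((A @ [c]) @ v # C @ D)) (form a ((A @ [c]) @ C @ v # D)) TYPE('k)"
    by (rule Cons.IH)
  ultimately show ?case by (auto intro: eqv_trans)
qed

lemma row_perm_aux:
  "mset B = mset B' \<Longrightarrow> eqv par S (form a (A @ B)) (form a (A @ B')) TYPE('k::comm_ring_1)"
proof (induction B arbitrary: A B')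
  case Nil then have "B' = []" by simp
  then show ?case by (simp add: eqv_refl)
next
  case (Cons v B)
  note IH = Cons.IH
  have "v \<in> set B'" using Cons.prems by (metis list.set_intros(1) set_mset_mset)
  then obtain C D where B': "B' = C @ v # D" by (meson split_list)
  have "mset B = mset (C @ D)" using Cons.prems B' by simp
  from IH[OF this, of "A @ [v]"]
  have "eqv par S (form a (A @ v # B)) (form a (A @ v # C @ D)) TYPE('k)" by simp
  moreover have "eqv par S (form a (A @ v # C @ D)) (form a (A @ C @ v # D)) TYPE('k)"
    by (rule row_move)
  ultimately show ?case using B' by (auto intro: eqv_trans)
qed

lemma row_perm:
  "mset B = mset B' \<Longrightarrow> eqv par S (form a B) (form a B') TYPE('k::comm_ring_1)"
  using row_perm_aux[where A="[]"] by simp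

abbreviation "rowsne ws \<equiv> (\<forall>w\<in>set ws. w \<noteq> [])"

lemma tlen_form_eq:
  assumes "rowsne ws" "rowsne ws'" "sum_list (map length ws) = sum_list (map length ws')"
  shows "tlen (form a ws) = tlen (form b ws')"
  using assms by (simp add: tlen_form)

lemma sum_length_mset: "mset ws = mset ws' \<Longrightarrow> sum_list (map length ws) = sum_list (map length ws')"
  by (metis mset_map sum_mset_sum_list)

lemma letters_swap_N:
  assumes ne: "rowsne A" "rowsne B" and S: "S \<noteq> []"
    and N: "N = tlen (form a (A @ (P @ x # y # S) # B))" and r: "r = Suc (length A + length B)"
  shows "eqv par (Hi N r) (form a (A @ (P @ x # y # S) # B)) (form a (A @ (P @ y # x # S) # B)) TYPE('k::comm_ring_1)"
  unfolding N r by (rule eqv_sgn2[OF row_swap_letters]) (use ne S in auto)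

lemma inrow_move:
  assumes ne: "rowsne A" "rowsne B" and S: "S \<noteq> []"
    and N: "N = tlen (form a (A @ (X @ v # C @ D @ S) # B))" and r: "r = Suc (length A + length B)"
  shows "eqv par (Hi N r) (form a (A @ (X @ v # C @ D @ S) # B)) (form a (A @ (X @ C @ v # D @ S) # B)) TYPE('k::comm_ring_1)"
  using N
proof (induction C arbitrary: X)
  case Nil then show ?case by (simp add: eqv_refl)
next
  case (Cons c C)
  have 1: "eqv par (Hi N r) (form a (A @ (X @ v # c # (C @ D @ S)) # B)) (form a (A @ (X @ c # v # (C @ D @ S)) # B)) TYPE('k)"
  proof (rule letters_swap_N)
    show "N = tlen (form a (A @ (X @ v # c # C @ D @ S) # B))" using Cons.prems by simp
  qed (use ne S r in auto)
  have "tlen (form a (A @ ((X @ [c]) @ v # C @ D @ S) # B)) = tlen (form a (A @ (X @ v # c # C @ D @ S) # B))"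
    using ne by (intro tlen_form_eq) auto
  then have "N = tlen (form a (A @ ((X @ [c]) @ v # C @ D @ S) # B))"
    using Cons.prems by simp
  from Cons.IH[OF this]
  have 2: "eqv par (Hi N r) (form a (A @ (X @ c # v # C @ D @ S) # B)) (form a (A @ (X @ c # C @ v # D @ S) # B)) TYPE('k)"
    by simp
  show ?case using eqv_trans[OF 1 2] by simp
qed

lemma inrow_perm_aux:
  assumes ne: "rowsne A" "rowsne B" and S: "S \<noteq> []"
    and N: "N = tlen (form a (A @ (X @ P @ S) # B))" and r: "r = Suc (length A + length B)"
    and m: "mset P = mset P'"
  shows "eqv par (Hi N r) (form a (A @ (X @ P @ S) # B)) (form a (A @ (X @ P' @ S) # B)) TYPE('k::comm_ring_1)"
  using N m
proof (induction P arbitrary: X P')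
  case Nil then have "P' = []" by simp
  then show ?case by (simp add: eqv_refl)
next
  case (Cons v P)
  have "v \<in> set P'" using Cons.prems by (metis list.set_intros(1) set_mset_mset)
  then obtain C D where P': "P' = C @ v # D" by (meson split_list)
  have m2: "mset P = mset (C @ D)" using Cons.prems P' by simp
  have N2: "N = tlen (form a (A @ ((X @ [v]) @ P @ S) # B))" using Cons.prems by simp
  from Cons.IH[OF N2 m2]
  have 1: "eqv par (Hi N r) (form a (A @ (X @ v # P @ S) # B)) (form a (A @ (X @ v # C @ D @ S) # B)) TYPE('k)" by simp
  have "length P = length (C @ D)" using m2 by (metis size_mset)
  then have "tlen (form a (A @ (X @ v # C @ D @ S) # B)) = tlen (form a (A @ (X @ v # P @ S) # B))"
    using ne by (intro tlen_form_eq) auto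
  then have N3: "N = tlen (form a (A @ (X @ v # C @ D @ S) # B))"
    using Cons.prems by simp
  have 2: "eqv par (Hi N r) (form a (A @ (X @ v # C @ D @ S) # B)) (form a (A @ (X @ C @ v # D @ S) # B)) TYPE('k)"
    by (rule inrow_move[OF ne S N3 r])
  show ?case using eqv_trans[OF 1 2] P' by simp
qed

lemma head_swap_N:
  assumes ne: "rowsne ws" and S: "S \<noteq> []"
    and N: "N = tlen (form a ((b # S) # ws))" and r: "r = Suc (length ws)"
  shows "eqv par (Hi N r) (form a ((b # S) # ws)) (form b ((a # S) # ws)) TYPE('k::comm_ring_1)"
  unfolding N r by (rule eqv_sgn2[OF head_swap[OF ne S]])

lemma head_transp:
  assumes ne: "rowsne A" "rowsne B"
    and N: "N = tlen (form a (A @ (P @ x # P2 @ [l]) # B))" and r: "r = Suc (length A + length B)"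
  shows "eqv par (Hi N r) (form a (A @ (P @ x # P2 @ [l]) # B)) (form x (A @ (P @ a # P2 @ [l]) # B)) TYPE('k::comm_ring_1)"
proof -
  let ?w = "P @ x # P2 @ [l]"
  have "mset (A @ ?w # B) = mset (?w # A @ B)" by simp
  then have 1: "eqv par (Hi N r) (form a (A @ ?w # B)) (form a (?w # A @ B)) TYPE('k)" by (rule row_perm)
  have ne2: "rowsne (A @ B)" using ne by auto
  have "tlen (form a ([] @ ([] @ (P @ x # P2) @ [l]) # (A @ B))) = tlen (form a (A @ (P @ x # P2 @ [l]) # B))"
    using ne by (intro tlen_form_eq) auto
  then have N2: "N = tlen (form a ([] @ ([] @ (P @ x # P2) @ [l]) # (A @ B)))" using N by simp
  have 2: "eqv par (Hi N r) (form a ([] @ ([] @ (P @ x # P2) @ [l]) # (A @ B))) (form a ([] @ ([] @ (x # P @ P2) @ [l]) # (A @ B))) TYPE('k)"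
    by (rule inrow_perm_aux[OF _ _ _ N2]) (use ne r in auto)
  then have 2: "eqv par (Hi N r) (form a ((P @ x # P2 @ [l]) # A @ B)) (form a ((x # P @ P2 @ [l]) # A @ B)) TYPE('k)" by simp
  have "tlen (form a ((x # (P @ P2 @ [l])) # (A @ B))) = tlen (form a (A @ (P @ x # P2 @ [l]) # B))"
    using ne by (intro tlen_form_eq) auto
  then have N3: "N = tlen (form a ((x # (P @ P2 @ [l])) # (A @ B)))" using N by simp
  have 3: "eqv par (Hi N r) (form a ((x # (P @ P2 @ [l])) # (A @ B))) (form x ((a # (P @ P2 @ [l])) # (A @ B))) TYPE('k)"
    by (rule head_swap_N[OF ne2 _ N3]) (use r in auto)
  have "tlen (form x ([] @ ([] @ (a # P @ P2) @ [l]) # (A @ B))) = tlen (form a (A @ (P @ x # P2 @ [l]) # B))"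
    using ne by (intro tlen_form_eq) auto
  then have N4: "N = tlen (form x ([] @ ([] @ (a # P @ P2) @ [l]) # (A @ B)))" using N by simp
  have 4: "eqv par (Hi N r) (form x ([] @ ([] @ (a # P @ P2) @ [l]) # (A @ B))) (form x ([] @ ([] @ (P @ a # P2) @ [l]) # (A @ B))) TYPE('k)"
    by (rule inrow_perm_aux[OF _ _ _ N4]) (use ne r in auto)
  then have 4: "eqv par (Hi N r) (form x ((a # P @ P2 @ [l]) # A @ B)) (form x ((P @ a # P2 @ [l]) # A @ B)) TYPE('k)" by simp
  have "mset ((P @ a # P2 @ [l]) # A @ B) = mset (A @ (P @ a # P2 @ [l]) # B)" by simp
  then have 5: "eqv par (Hi N r) (form x ((P @ a # P2 @ [l]) # A @ B)) (form x (A @ (P @ a # P2 @ [l]) # B)) TYPE('k)" by (rule row_perm)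
  show ?thesis
    apply (rule eqv_trans[OF 1])
    apply (rule eqv_trans[OF _ 5])
    using eqv_trans[OF eqv_trans[OF 2 3] 4] by simp
qed

fun fill :: "'x list \<Rightarrow> 'x list list \<Rightarrow> 'x list list" where
  "fill cs [] = []"
| "fill cs (w # ws) = (take (length w - 1) cs @ [last w]) # fill (drop (length w - 1) cs) ws"

definition chn :: "'x list list \<Rightarrow> 'x list" where
  "chn ws = concat (map butlast ws)"

lemma chn_simps[simp]: "chn [] = []" "chn (w # ws) = butlast w @ chn ws"
  by (auto simp: chn_def)

lemma length_butlast_take: "w \<noteq> [] \<Longrightarrow> length w - 1 = length (butlast w)" by simp

lemma fill_chn: "rowsne ws \<Longrightarrow> fill (chn ws) ws = ws"
proof (induction ws)
  case (Cons w ws)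
  then show ?case by (simp add: length_butlast_take)
qed simp

lemma fill_props:
  "rowsne ws \<Longrightarrow> length cs = length (chn ws) \<Longrightarrow>
    chn (fill cs ws) = cs \<and> map length (fill cs ws) = map length ws \<and> map last (fill cs ws) = map last ws
    \<and> rowsne (fill cs ws)"
proof (induction ws arbitrary: cs)
  case Nil then show ?case by simp
next
  case (Cons w ws)
  have k: "length w - 1 = length (butlast w)" using Cons.prems by simp
  have "length (drop (length w - 1) cs) = length (chn ws)" using Cons.prems k by simp
  note IH = Cons.IH[OF _ this]
  have lt: "length (butlast w) \<le> length cs" using Cons.prems by simp
  show ?case using IH Cons.prems k lt
    by (auto simp: min_def)
qed

lemma fill_length: "length (fill cs ws) = length ws"
  by (induction ws arbitrary: cs) auto

lemma fill_loc:
  assumes "rowsne ws" "length cs = length (chn ws)" "p < length cs"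
  shows "\<exists>A P P2 l B. fill cs ws = A @ (P @ cs ! p # P2 @ [l]) # B \<and>
      (\<forall>z. fill (cs[p := z]) ws = A @ (P @ z # P2 @ [l]) # B) \<and> Suc (length A + length B) = length ws"
  using assms
proof (induction ws arbitrary: cs p)
  case Nil then show ?case by simp
next
  case (Cons w ws)
  let ?k = "length w - 1"
  have k: "?k = length (butlast w)" using Cons.prems by simp
  show ?case
  proof (cases "p < ?k")
    case True
    let ?P = "take p cs" and ?P2 = "take (?k - Suc p) (drop (Suc p) cs)" and ?B = "fill (drop ?k cs) ws"
    have pl: "p < length cs" using Cons.prems(3) by simp
    have "take ?k cs = take (p + (?k - p)) cs" using True by simp
    also have "\<dots> = ?P @ take (?k - p) (drop p cs)" by (rule take_add)
    also have "drop p cs = cs ! p # drop (Suc p) cs" using pl by (rule Cons_nth_drop_Suc[symmetric])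
    also have "take (?k - p) (cs ! p # drop (Suc p) cs) = cs ! p # ?P2" using True
      by (cases "?k - p") (auto simp: Suc_diff_Suc[symmetric])
    finally have tk: "take ?k cs = ?P @ cs ! p # ?P2" .
    have tk2: "take ?k (cs[p := z]) = ?P @ z # ?P2" for z
    proof -
      have "take ?k (cs[p := z]) = (take ?k cs)[p := z]" by (rule take_update_swap)
      also have "\<dots> = (?P @ cs ! p # ?P2)[p := z]" by (simp only: tk)
      also have "\<dots> = ?P @ z # ?P2" using pl by (simp add: list_update_append)
      finally show ?thesis .
    qed
    have dk: "drop ?k (cs[p := z]) = drop ?k cs" for z using True by simp
    show ?thesis
      by (rule exI[of _ "[]"], rule exI[of _ ?P], rule exI[of _ ?P2], rule exI[of _ "last w"], rule exI[of _ ?B])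
        (simp only: fill.simps tk tk2 dk, simp add: fill_length)
  next
    case False
    let ?cs = "drop ?k cs"
    have l2: "length ?cs = length (chn ws)" using Cons.prems k by simp
    have p2: "p - ?k < length ?cs" using Cons.prems False by simp
    have nws: "rowsne ws" using Cons.prems by simp
    from Cons.IH[OF nws l2 p2] obtain A P P2 l B where IH: "fill ?cs ws = A @ (P @ ?cs ! (p - ?k) # P2 @ [l]) # B"
      "\<forall>z. fill (?cs[p - ?k := z]) ws = A @ (P @ z # P2 @ [l]) # B" "Suc (length A + length B) = length ws"
      by blast
    have e1: "?cs ! (p - ?k) = cs ! p" using False Cons.prems by simp
    have e2: "drop ?k (cs[p := z]) = ?cs[p - ?k := z]" for z using False by (simp add: drop_update_swap)
    have e3: "take ?k (cs[p := z]) = take ?k cs" for z using False by simp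
    show ?thesis
      by (rule exI[of _ "(take ?k cs @ [last w]) # A"], rule exI[of _ P], rule exI[of _ P2], rule exI[of _ l], rule exI[of _ B])
        (simp only: fill.simps e2 e3 IH(1,2) e1[symmetric], use IH(3) in simp)
  qed
qed

definition ff :: "'x list \<Rightarrow> 'x list list \<Rightarrow> 'x gterm" where
  "ff c ws0 = form (hd c) (fill (tl c) ws0)"

definition tr :: "'x list \<Rightarrow> nat \<Rightarrow> nat \<Rightarrow> 'x list" where
  "tr c i j = c[j := c ! i, i := c ! j]"

lemma tr_length[simp]: "length (tr c i j) = length c" by (simp add: tr_def)

lemma tlen_ff:
  assumes "rowsne ws0" "length c = Suc (length (chn ws0))"
  shows "tlen (ff c ws0) = tlen (form x ws0)"
proof -
  have "length (tl c) = length (chn ws0)" using assms by simp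
  from fill_props[OF assms(1) this] have "map length (fill (tl c) ws0) = map length ws0" "rowsne (fill (tl c) ws0)"
    by auto
  then show ?thesis unfolding ff_def using assms(1) by (intro tlen_form_eq) (auto dest: arg_cong[of _ _ sum_list])
qed

lemma ht_flat:
  assumes ne: "rowsne ws0" and L: "length c = Suc (length (chn ws0))" and p: "0 < p" "p < length c"
    and N: "N = tlen (form x ws0)" and r: "r = length ws0"
  shows "eqv par (Hi N r) (ff c ws0) (ff (tr c 0 p) ws0) TYPE('k::comm_ring_1)"
proof -
  obtain a cs where c: "c = a # cs" using L by (cases c) auto
  obtain q where q: "p = Suc q" using p by (cases p) auto
  have L2: "length cs = length (chn ws0)" and ql: "q < length cs" using L p c q by auto
  obtain A P P2 l B where loc: "fill cs ws0 = A @ (P @ cs ! q # P2 @ [l]) # B"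
      "\<forall>z. fill (cs[q := z]) ws0 = A @ (P @ z # P2 @ [l]) # B" "Suc (length A + length B) = length ws0"
    using fill_loc[OF ne L2 ql] by blast
  have rne: "rowsne (fill cs ws0)" using fill_props[OF ne L2] by simp
  then have neA: "rowsne A" "rowsne B" using loc(1) by auto
  have trc: "tr c 0 p = cs ! q # cs[q := a]" unfolding tr_def c q by simp
  have N': "N = tlen (form a (A @ (P @ cs ! q # P2 @ [l]) # B))"
    using tlen_ff[OF ne L, of x] N c loc(1) by (simp add: ff_def)
  have "eqv par (Hi N r) (form a (A @ (P @ cs ! q # P2 @ [l]) # B)) (form (cs ! q) (A @ (P @ a # P2 @ [l]) # B)) TYPE('k)"
    by (rule head_transp[OF neA N']) (use loc(3) r in simp)
  then show ?thesis unfolding ff_def trc using c loc by simp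
qed

lemma tr_flat:
  assumes ne: "rowsne ws0" and L: "length c = Suc (length (chn ws0))" and ij: "i < length c" "j < length c"
    and N: "N = tlen (form x ws0)" and r: "r = length ws0"
  shows "eqv par (Hi N r) (ff c ws0) (ff (tr c i j) ws0) TYPE('k::comm_ring_1)"
proof -
  have sym: "tr c i j = tr c j i" by (cases "i = j") (auto simp: tr_def list_update_swap)
  consider "i = j" | "i = 0" "j \<noteq> 0" | "j = 0" "i \<noteq> 0" | "i \<noteq> 0" "j \<noteq> 0" "i \<noteq> j" by (cases "i = j"; cases "i = 0"; cases "j = 0") auto
  then show ?thesis
  proof cases
    case 1 then show ?thesis by (simp add: tr_def eqv_refl)
  next
    case 2 then show ?thesis using ht_flat[OF ne L _ ij(2) N r] by simp
  next
    case 3 then show ?thesis using ht_flat[OF ne L _ ij(1) N r] sym by simp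
  next
    case 4
    let ?c1 = "tr c 0 i"
    let ?c2 = "tr ?c1 0 j"
    let ?c3 = "tr ?c2 0 i"
    have L1: "length ?c1 = Suc (length (chn ws0))" using L by simp
    have L2: "length ?c2 = Suc (length (chn ws0))" using L by simp
    have e1: "eqv par (Hi N r) (ff c ws0) (ff ?c1 ws0) TYPE('k)" using ht_flat[OF ne L _ ij(1) N r] 4 by simp
    have e2: "eqv par (Hi N r) (ff ?c1 ws0) (ff ?c2 ws0) TYPE('k)" using ht_flat[OF ne L1 _ _ N r] 4 ij by simp
    have e3: "eqv par (Hi N r) (ff ?c2 ws0) (ff ?c3 ws0) TYPE('k)" using ht_flat[OF ne L2 _ _ N r] 4 ij by simp
    have l0: "0 < length c" using ij by (cases c) auto
    have "?c3 = tr c i j"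
      by (rule nth_equalityI) (use 4 ij l0 in \<open>auto simp: tr_def nth_list_update\<close>)
    then show ?thesis using eqv_trans[OF eqv_trans[OF e1 e2] e3] by simp
  qed
qed

lemma perm_flat_aux:
  assumes ne: "rowsne ws0" and N: "N = tlen (form x ws0)" and r: "r = length ws0"
  shows "length c = Suc (length (chn ws0)) \<Longrightarrow> length d = length c \<Longrightarrow> mset (drop n c) = mset (drop n d)
    \<Longrightarrow> take n c = take n d \<Longrightarrow> eqv par (Hi N r) (ff c ws0) (ff d ws0) TYPE('k::comm_ring_1)"
proof (induction "length c - n" arbitrary: n c)
  case 0
  have le: "length c \<le> n" using 0(1) by simp
  have "c = take n c" using le by simp
  also have "\<dots> = take n d" by (rule 0(5))
  also have "\<dots> = d" using le 0(3) by simp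
  finally have cd: "c = d" .
  show ?case unfolding cd by (rule eqv_refl)
next
  case (Suc m)
  have nl: "n < length c" using Suc.hyps(2) by simp
  show ?case
  proof (cases "c ! n = d ! n")
    case True
    have t: "take (Suc n) c = take (Suc n) d"
    proof -
      have "take (Suc n) c = take n c @ [c ! n]" using nl by (rule take_Suc_conv_app_nth)
      moreover have "take (Suc n) d = take n d @ [d ! n]" using nl Suc.prems(2) by (intro take_Suc_conv_app_nth) simp
      ultimately show ?thesis using Suc.prems(4) True by simp
    qed
    have "mset (drop (Suc n) c) = mset (drop (Suc n) d)"
    proof -
      have "drop n c = c ! n # drop (Suc n) c" using nl by (simp add: Cons_nth_drop_Suc)
      moreover have "drop n d = d ! n # drop (Suc n) d" using nl Suc.prems(2) by (simp add: Cons_nth_drop_Suc)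
      ultimately show ?thesis using Suc.prems(3) True by simp
    qed
    have mm: "m = length c - Suc n" using Suc.hyps(2) by simp
    show ?thesis by (rule Suc.hyps(1)[where n="Suc n" and c=c, OF mm Suc.prems(1,2) \<open>mset (drop (Suc n) c) = mset (drop (Suc n) d)\<close> t])
  next
    case False
    have "drop n d = d ! n # drop (Suc n) d" using nl Suc.prems(2) by (simp add: Cons_nth_drop_Suc)
    then have "d ! n \<in> set (drop n d)" by (metis list.set_intros(1))
    then have "d ! n \<in> set (drop n c)" using Suc.prems(3) by (metis set_mset_mset)
    then obtain j' where j': "j' < length (drop n c)" "drop n c ! j' = d ! n" by (metis in_set_conv_nth)
    define j where "j = n + j'"
    have jl: "j < length c" and cj: "c ! j = d ! n" using j' nl by (auto simp: j_def)
    let ?c' = "tr c n j"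
    have e: "eqv par (Hi N r) (ff c ws0) (ff ?c' ws0) TYPE('k)" by (rule tr_flat[OF ne Suc.prems(1) nl jl N r])
    have dc: "drop n ?c' = tr (drop n c) 0 j'" unfolding tr_def j_def using nl j'
      by (simp add: drop_update_swap)
    have "mset (tr (drop n c) 0 j') = mset (drop n c)" unfolding tr_def
      using mset_swap[of 0 "drop n c" j'] j' by simp
    then have ms: "mset (drop n ?c') = mset (drop n c)" by (simp only: dc)
    have c'n: "?c' ! n = d ! n" using cj nl jl by (simp add: tr_def nth_list_update)
    have t: "take (Suc n) ?c' = take (Suc n) d"
    proof -
      have "take n ?c' = take n c" unfolding tr_def j_def by simp
      moreover have "take (Suc n) ?c' = take n ?c' @ [?c' ! n]" using nl by (intro take_Suc_conv_app_nth) simp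
      moreover have "take (Suc n) d = take n d @ [d ! n]" using nl Suc.prems(2) by (intro take_Suc_conv_app_nth) simp
      ultimately show ?thesis using Suc.prems(4) c'n by simp
    qed
    have "mset (drop (Suc n) ?c') = mset (drop (Suc n) d)"
    proof -
      have "mset (drop n ?c') = mset (drop n d)" using ms Suc.prems(3) by simp
      moreover have "drop n ?c' = ?c' ! n # drop (Suc n) ?c'" using nl by (simp add: Cons_nth_drop_Suc)
      moreover have "drop n d = d ! n # drop (Suc n) d" using nl Suc.prems(2) by (simp add: Cons_nth_drop_Suc)
      ultimately show ?thesis using c'n by simp
    qed
    moreover have mm: "m = length ?c' - Suc n" using Suc.hyps(2) by simp
    moreover have "length ?c' = Suc (length (chn ws0))" using Suc.prems(1) by (simp only: tr_length)
    moreover have "length d = length ?c'" using Suc.prems(2) by (simp only: tr_length)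
    ultimately have "eqv par (Hi N r) (ff ?c' ws0) (ff d ws0) TYPE('k)"
      by (intro Suc.hyps(1)[where n="Suc n" and c="?c'"] t)
    then show ?thesis using eqv_trans[OF e] by blast
  qed
qed

lemma perm_flat:
  assumes ne: "rowsne ws0" and N: "N = tlen (form x ws0)" and r: "r = length ws0"
    and L: "length c = Suc (length (chn ws0))" and m: "mset c = mset d"
  shows "eqv par (Hi N r) (ff c ws0) (ff d ws0) TYPE('k::comm_ring_1)"
proof -
  have "length d = length c" using m by (metis mset_eq_length)
  then show ?thesis by (rule perm_flat_aux[OF ne N r L, where n=0]) (use m in simp_all)
qed

lemma sgn2_letters: "sgn2 par (Letter a) (Letter b) = sg (par a \<and> par b)"
  by (simp add: sgn2_sg)

lemma sgn2_rows: "v \<noteq> [] \<Longrightarrow> w \<noteq> [] \<Longrightarrow> sgn2 par (rnest v) (rnest w) = sg (plist par v \<and> plist par w)"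
  by (simp add: sgn2_sg tpar_rnest)

lemma head_swap_mh:
  assumes ne: "rowsne ws" and S: "S \<noteq> []"
    and N: "N = tlen (form a ((b # S) # ws))" and r: "r = Suc (length ws)"
  shows "mh par (Hi N r) (form a ((b # S) # ws)) (sg (par a \<and> par b) :: 'k::comm_ring_1) (form b ((a # S) # ws))"
  unfolding N r sgn2_letters[symmetric] by (rule head_swap[OF ne S])

lemma letters_swap_mh:
  assumes ne: "rowsne A" "rowsne B" and S: "S \<noteq> []"
    and N: "N = tlen (form a (A @ (P @ x # y # S) # B))" and r: "r = Suc (length A + length B)"
  shows "mh par (Hi N r) (form a (A @ (P @ x # y # S) # B)) (sg (par x \<and> par y) :: 'k::comm_ring_1) (form a (A @ (P @ y # x # S) # B))"
  unfolding N r sgn2_letters[symmetric] by (rule row_swap_letters) (use ne S in auto)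

lemma rotate_mh:
  assumes ne: "rowsne A" "rowsne B" and S: "S \<noteq> []"
    and N: "N = tlen (form a (A @ (X @ x # P @ S) # B))" and r: "r = Suc (length A + length B)"
  shows "mh par (Hi N r) (form a (A @ (X @ x # P @ S) # B)) (sg (par x \<and> plist par P) :: 'k::comm_ring_1) (form a (A @ (X @ P @ x # S) # B))"
  using N
proof (induction P arbitrary: X)
  case Nil then show ?case by (simp add: mh_refl)
next
  case (Cons p P)
  have 1: "mh par (Hi N r) (form a (A @ (X @ x # p # (P @ S)) # B)) (sg (par x \<and> par p) :: 'k) (form a (A @ (X @ p # x # (P @ S)) # B))"
    by (rule letters_swap_mh) (use ne S Cons.prems r in auto)
  have "tlen (form a (A @ ((X @ [p]) @ x # P @ S) # B)) = tlen (form a (A @ (X @ x # p # P @ S) # B))"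
    using ne by (intro tlen_form_eq) auto
  then have "N = tlen (form a (A @ ((X @ [p]) @ x # P @ S) # B))" using Cons.prems by simp
  from Cons.IH[OF this]
  have 2: "mh par (Hi N r) (form a (A @ (X @ p # x # P @ S) # B)) (sg (par x \<and> plist par P) :: 'k) (form a (A @ (X @ p # P @ x # S) # B))"
    by simp
  have "(sg (par x \<and> par p) :: 'k) * sg (par x \<and> plist par P) = sg (par x \<and> plist par (p # P))"
    by (simp add: sg_mult) (auto simp: sg_def)
  then show ?case using mh_trans[OF 1 2] by simp
qed

lemma swap_rows_mh:
  assumes "v \<noteq> []" "w \<noteq> []"
  shows "mh par S (form a (A @ v # w # B)) (sg (plist par v \<and> plist par w) :: 'k::comm_ring_1) (form a (A @ w # v # B))"
  using form_swap_rows[of par S a A v w B] assms by (simp add: sgn2_rows)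

lemma front_exchange:
  assumes ne: "rowsne ws" and R: "\<rho> \<noteq> []" "\<sigma> \<noteq> []"
    and N: "N = tlen (form a ((p # \<rho>) # (q # \<sigma>) # ws))" and r: "r = Suc (Suc (length ws))"
  shows "mh par (Hi N r) (form a ((p # \<rho>) # (q # \<sigma>) # ws))
     (sg (((par q \<and> plist par \<rho>) \<noteq> (par p \<and> par q)) \<noteq> (par p \<and> plist par \<rho>)) :: 'k::comm_ring_1)
     (form a ((q # \<rho>) # (p # \<sigma>) # ws))"
proof -
  have tl: "tlen (form x ((y # \<rho>) # (z # \<sigma>) # ws)) = N" for x y z
    unfolding N using ne by (intro tlen_form_eq) auto
  have tl2: "tlen (form x ((y # \<sigma>) # (z # \<rho>) # ws)) = N" for x y z
    unfolding N using ne by (intro tlen_form_eq) auto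
  have ne1: "rowsne ((q # \<sigma>) # ws)" "rowsne ((a # \<rho>) # ws)" using ne by auto
  have 1: "mh par (Hi N r) (form a ((p # \<rho>) # (q # \<sigma>) # ws)) (sg (par a \<and> par p) :: 'k) (form p ((a # \<rho>) # (q # \<sigma>) # ws))"
    by (rule head_swap_mh[OF ne1(1) R(1)]) (use tl r in auto)
  have 2: "mh par (Hi N r) (form p ((a # \<rho>) # (q # \<sigma>) # ws)) (sg (plist par (a # \<rho>) \<and> plist par (q # \<sigma>)) :: 'k) (form p ((q # \<sigma>) # (a # \<rho>) # ws))"
    using swap_rows_mh[of "a # \<rho>" "q # \<sigma>" par "Hi N r" p "[]" ws] by simp
  have 3: "mh par (Hi N r) (form p ((q # \<sigma>) # (a # \<rho>) # ws)) (sg (par p \<and> par q) :: 'k) (form q ((p # \<sigma>) # (a # \<rho>) # ws))"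
    by (rule head_swap_mh[OF ne1(2) R(2)]) (use tl2 r in auto)
  have 4: "mh par (Hi N r) (form q ((p # \<sigma>) # (a # \<rho>) # ws)) (sg (plist par (p # \<sigma>) \<and> plist par (a # \<rho>)) :: 'k) (form q ((a # \<rho>) # (p # \<sigma>) # ws))"
    using swap_rows_mh[of "p # \<sigma>" "a # \<rho>" par "Hi N r" q "[]" ws] by simp
  have ne2: "rowsne ((p # \<sigma>) # ws)" using ne by auto
  have 5: "mh par (Hi N r) (form q ((a # \<rho>) # (p # \<sigma>) # ws)) (sg (par q \<and> par a) :: 'k) (form a ((q # \<rho>) # (p # \<sigma>) # ws))"
    by (rule head_swap_mh[OF ne2 R(1)]) (use tl r in auto)
  have e: "(sg (par a \<and> par p) :: 'k) * sg (plist par (a # \<rho>) \<and> plist par (q # \<sigma>)) * sg (par p \<and> par q)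
      * sg (plist par (p # \<sigma>) \<and> plist par (a # \<rho>)) * sg (par q \<and> par a)
      = sg (((par q \<and> plist par \<rho>) \<noteq> (par p \<and> par q)) \<noteq> (par p \<and> plist par \<rho>))"
    by (simp add: sg_mult) (cases "par a"; cases "par p"; cases "par q"; cases "plist par \<rho>"; cases "plist par \<sigma>"; simp)
  show ?thesis using mh_trans[OF mh_trans[OF mh_trans[OF mh_trans[OF 1 2] 3] 4] 5] e by simp
qed

lemma block_exchange:
  assumes ne: "rowsne ws"
  shows "R1 \<noteq> [] \<Longrightarrow> R2 \<noteq> [] \<Longrightarrow> length P = length Q \<Longrightarrow> N = tlen (form a ((P @ R1) # (Q @ R2) # ws))
    \<Longrightarrow> r = Suc (Suc (length ws)) \<Longrightarrow>
    mh par (Hi N r) (form a ((P @ R1) # (Q @ R2) # ws))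
     (sg (((plist par P \<and> plist par R1) \<noteq> (plist par P \<and> plist par Q)) \<noteq> (plist par R1 \<and> plist par Q)) :: 'k::comm_ring_1)
     (form a ((Q @ R1) # (P @ R2) # ws))"
proof (induction P arbitrary: Q R1 R2)
  case Nil then show ?case by (simp add: mh_refl)
next
  case (Cons p P')
  obtain q Q' where Q: "Q = q # Q'" using Cons.prems(3) by (cases Q) auto
  have lQ: "length P' = length Q'" using Cons.prems(3) Q by simp
  have tl: "tlen (form a ((U1 @ R1) # (U2 @ R2) # ws)) = N" if "length U1 = Suc (length P')" "length U2 = Suc (length P')" for U1 U2
    unfolding Cons.prems(4) using ne Cons.prems(1,2) that Cons.prems(3) by (intro tlen_form_eq) auto
  let ?r = "Suc (Suc (length ws))"
  have 1: "mh par (Hi N r) (form a ((p # (P' @ R1)) # (q # (Q' @ R2)) # ws))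
     (sg (((par q \<and> plist par (P' @ R1)) \<noteq> (par p \<and> par q)) \<noteq> (par p \<and> plist par (P' @ R1))) :: 'k)
     (form a ((q # (P' @ R1)) # (p # (Q' @ R2)) # ws))"
    by (rule front_exchange[OF ne]) (use Cons.prems tl[of "p # P'" "q # Q'"] Q in auto)
  have 2: "mh par (Hi N r) (form a ([] @ ([] @ q # P' @ R1) # ((p # Q' @ R2) # ws))) (sg (par q \<and> plist par P') :: 'k)
      (form a ([] @ ([] @ P' @ q # R1) # ((p # Q' @ R2) # ws)))"
    by (rule rotate_mh) (use ne Cons.prems tl[of "q # P'" "p # Q'"] Q lQ in auto)
  have 3: "mh par (Hi N r) (form a ([P' @ q # R1] @ ([] @ p # Q' @ R2) # ws)) (sg (par p \<and> plist par Q') :: 'k)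
      (form a ([P' @ q # R1] @ ([] @ Q' @ p # R2) # ws))"
  proof (rule rotate_mh)
    have "tlen (form a ([P' @ q # R1] @ ([] @ p # Q' @ R2) # ws)) = tlen (form a ((P' @ q # R1) # (p # Q' @ R2) # ws))" by simp
    also have "\<dots> = N" unfolding Cons.prems(4) using ne Cons.prems(1,2) Q lQ by (intro tlen_form_eq) auto
    finally show "N = tlen (form a ([P' @ q # R1] @ ([] @ p # Q' @ R2) # ws))" by simp
  qed (use ne Cons.prems in auto)
  have 4: "mh par (Hi N r) (form a ((P' @ (q # R1)) # (Q' @ (p # R2)) # ws))
     (sg (((plist par P' \<and> plist par (q # R1)) \<noteq> (plist par P' \<and> plist par Q')) \<noteq> (plist par (q # R1) \<and> plist par Q')) :: 'k)
     (form a ((Q' @ (q # R1)) # (P' @ (p # R2)) # ws))"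
  proof (rule Cons.IH)
    have "tlen (form a ((P' @ (q # R1)) # (Q' @ (p # R2)) # ws)) = tlen (form a ((p # P' @ R1) # (q # Q' @ R2) # ws))"
      using ne lQ by (intro tlen_form_eq) auto
    then show "N = tlen (form a ((P' @ (q # R1)) # (Q' @ (p # R2)) # ws))" using Cons.prems(4) Q by simp
  qed (use lQ Cons.prems(5) in auto)
  have 5: "mh par (Hi N r) (form a ([] @ ([] @ q # Q' @ R1) # ((P' @ p # R2) # ws))) (sg (par q \<and> plist par Q') :: 'k)
      (form a ([] @ ([] @ Q' @ q # R1) # ((P' @ p # R2) # ws)))"
  proof (rule rotate_mh)
    have "tlen (form a ([] @ ([] @ q # Q' @ R1) # ((P' @ p # R2) # ws))) = tlen (form a ((p # P' @ R1) # (q # Q' @ R2) # ws))"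
      using ne lQ by (intro tlen_form_eq) auto
    then show "N = tlen (form a ([] @ ([] @ q # Q' @ R1) # ((P' @ p # R2) # ws)))" using Cons.prems(4) Q by simp
  qed (use ne Cons.prems in auto)
  have 6: "mh par (Hi N r) (form a ([q # Q' @ R1] @ ([] @ p # P' @ R2) # ws)) (sg (par p \<and> plist par P') :: 'k)
      (form a ([q # Q' @ R1] @ ([] @ P' @ p # R2) # ws))"
  proof (rule rotate_mh)
    have "tlen (form a ([q # Q' @ R1] @ ([] @ p # P' @ R2) # ws)) = tlen (form a ((p # P' @ R1) # (q # Q' @ R2) # ws))"
      using ne lQ by (intro tlen_form_eq) auto
    then show "N = tlen (form a ([q # Q' @ R1] @ ([] @ p # P' @ R2) # ws))" using Cons.prems(4) Q by simp
  qed (use ne Cons.prems in auto)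
  have f5b: "mh par (Hi N r) (form a ((Q' @ q # R1) # (P' @ p # R2) # ws)) (sg (par q \<and> plist par Q') :: 'k)
      (form a ((q # Q' @ R1) # (P' @ p # R2) # ws))"
    using mh_sym[OF 5] by simp
  have f6b: "mh par (Hi N r) (form a ((q # Q' @ R1) # (P' @ p # R2) # ws)) (sg (par p \<and> plist par P') :: 'k)
      (form a ((q # Q' @ R1) # (p # P' @ R2) # ws))"
    using mh_sym[OF 6] by simp
  have f2b: "mh par (Hi N r) (form a ((q # P' @ R1) # (p # Q' @ R2) # ws)) (sg (par q \<and> plist par P') :: 'k)
      (form a ((P' @ q # R1) # (p # Q' @ R2) # ws))" using 2 by simp
  have f3b: "mh par (Hi N r) (form a ((P' @ q # R1) # (p # Q' @ R2) # ws)) (sg (par p \<and> plist par Q') :: 'k)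
      (form a ((P' @ q # R1) # (Q' @ p # R2) # ws))" using 3 by simp
  note all = mh_trans[OF mh_trans[OF mh_trans[OF mh_trans[OF mh_trans[OF 1 f2b] f3b] 4] f5b] f6b]
  have e: "(sg (((par q \<and> plist par (P' @ R1)) \<noteq> (par p \<and> par q)) \<noteq> (par p \<and> plist par (P' @ R1))) :: 'k)
     * sg (par q \<and> plist par P') * sg (par p \<and> plist par Q')
     * sg (((plist par P' \<and> plist par (q # R1)) \<noteq> (plist par P' \<and> plist par Q')) \<noteq> (plist par (q # R1) \<and> plist par Q'))
     * sg (par q \<and> plist par Q') * sg (par p \<and> plist par P')
     = sg (((plist par (p # P') \<and> plist par R1) \<noteq> (plist par (p # P') \<and> plist par (q # Q'))) \<noteq> (plist par R1 \<and> plist par (q # Q')))"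
    by (simp add: sg_mult) (cases "par p"; cases "par q"; cases "plist par P'"; cases "plist par Q'"; cases "plist par R1"; simp)
  show ?case using all e Q by simp
qed

lemma zero4:
  fixes par :: "'x \<Rightarrow> bool"
  assumes two: "(2::'k::field) \<noteq> 0" and ne: "rowsne ws" and S: "S \<noteq> []" and px: "par x"
    and N: "N = tlen (form x ((x # S) # ws))" and r: "r = Suc (length ws)" and HH: "Hi N r \<subseteq> H"
  shows "inspan par H [(1::'k, form x ((x # S) # ws))]"
proof -
  have "mh par (Hi N r) (form x ((x # S) # ws)) (sg (par x \<and> par x) :: 'k) (form x ((x # S) # ws))"
    by (rule head_swap_mh[OF ne S N r])
  then have "mh par (Hi N r) (form x ((x # S) # ws)) (-1 :: 'k) (form x ((x # S) # ws))" using px by simp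
  from mh_self[OF this two] show ?thesis using HH by (rule inspan_mono)
qed

lemma zero5:
  fixes par :: "'x \<Rightarrow> bool"
  assumes two: "(2::'k::field) \<noteq> 0" and ne: "rowsne ws" and pc: "par c" and lPQ: "length P = length Q"
    and N: "N = tlen (form a ((P @ [c]) # (Q @ [c]) # ws))" and r: "r = Suc (Suc (length ws))" and HH: "Hi N r \<subseteq> H"
  shows "inspan par H [(1::'k, form a ((P @ [c]) # (Q @ [c]) # ws))]"
proof -
  have 1: "mh par (Hi N r) (form a ((P @ [c]) # (Q @ [c]) # ws))
     (sg (((plist par P \<and> plist par [c]) \<noteq> (plist par P \<and> plist par Q)) \<noteq> (plist par [c] \<and> plist par Q)) :: 'k)
     (form a ((Q @ [c]) # (P @ [c]) # ws))"
    by (rule block_exchange[OF ne _ _ lPQ N r]) auto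
  have 2: "mh par (Hi N r) (form a ([] @ (Q @ [c]) # (P @ [c]) # ws)) (sg (plist par (Q @ [c]) \<and> plist par (P @ [c])) :: 'k)
     (form a ([] @ (P @ [c]) # (Q @ [c]) # ws))"
    by (rule swap_rows_mh) auto
  then have 2: "mh par (Hi N r) (form a ((Q @ [c]) # (P @ [c]) # ws)) (sg (plist par (Q @ [c]) \<and> plist par (P @ [c])) :: 'k)
     (form a ((P @ [c]) # (Q @ [c]) # ws))" by simp
  have e: "(sg (((plist par P \<and> plist par [c]) \<noteq> (plist par P \<and> plist par Q)) \<noteq> (plist par [c] \<and> plist par Q)) :: 'k)
     * sg (plist par (Q @ [c]) \<and> plist par (P @ [c])) = -1"
    using pc by (simp add: sg_mult) (cases "plist par P"; cases "plist par Q"; simp)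
  have "mh par (Hi N r) (form a ((P @ [c]) # (Q @ [c]) # ws)) (-1 :: 'k) (form a ((P @ [c]) # (Q @ [c]) # ws))"
    using mh_trans[OF 1 2] e by simp
  from mh_self[OF this two] show ?thesis using HH by (rule inspan_mono)
qed

lemma count_two:
  assumes "i < length d" "j < length d" "i \<noteq> j" "d ! i = x" "d ! j = x"
  shows "2 \<le> count (mset d) x"
proof -
  have gen: "2 \<le> count (mset d) x" if "i < j" "j < length d" "d ! i = x" "d ! j = x" for i j
  proof -
    have d: "d = take j d @ d ! j # drop (Suc j) d" using that(2) by (rule id_take_nth_drop)
    have "take j d ! i = x" "i < length (take j d)" using that by simp_all
    then have "x \<in> set (take j d)" by (metis nth_mem)
    then have c1: "0 < count (mset (take j d)) x" by simp
    have "count (mset (take j d @ d ! j # drop (Suc j) d)) x = count (mset (take j d)) x + 1 + count (mset (drop (Suc j) d)) x"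
      using that(4) by simp
    then have "2 \<le> count (mset (take j d @ d ! j # drop (Suc j) d)) x" using c1 by linarith
    moreover have "mset d = mset (take j d @ d ! j # drop (Suc j) d)" using d by (rule arg_cong)
    ultimately show ?thesis by simp
  qed
  show ?thesis
  proof (cases "i < j")
    case True then show ?thesis using gen assms by blast
  next
    case False then have "j < i" using assms(3) by simp
    then show ?thesis using gen assms by blast
  qed
qed

lemma mset_two:
  assumes "2 \<le> count (mset c) x"
  shows "mset (x # x # remove1 x (remove1 x c)) = mset c"
  using assms by (simp add: multiset_eq_iff)

definition rkey :: "'x list \<Rightarrow> nat \<times> 'x" where
  "rkey w = (length w, last w)"

lemma sort_rows:
  fixes ws :: "'x::linorder list list"
  shows "\<exists>ws1. mset ws1 = mset ws \<and> (\<forall>i j. i \<le> j \<longrightarrow> j < length ws1 \<longrightarrow> rkey (ws1 ! j) \<le> rkey (ws1 ! i))"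
proof -
  let ?s = "sort_key rkey ws"
  have s: "sorted (map rkey ?s)" by simp
  have "rkey (rev ?s ! j) \<le> rkey (rev ?s ! i)" if "i \<le> j" "j < length (rev ?s)" for i j
  proof -
    have "length (rev ?s) = length ?s" by simp
    have "rev ?s ! j = ?s ! (length ?s - Suc j)" "rev ?s ! i = ?s ! (length ?s - Suc i)" using that by (auto simp: rev_nth)
    moreover have "map rkey ?s ! (length ?s - Suc j) \<le> map rkey ?s ! (length ?s - Suc i)"
      using s that by (intro sorted_nth_mono) auto
    ultimately show ?thesis using that by simp
  qed
  then show ?thesis by (intro exI[of _ "rev ?s"]) auto
qed

lemma rkey_le: "rkey v \<le> rkey w \<Longrightarrow> length v \<le> length w \<and> (length v = length w \<longrightarrow> last v \<le> last w)"
  by (auto simp: rkey_def)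

lemma count_le_length: "count (mset c) x \<le> length c"
  by (metis count_le_size size_mset)

lemma caseA:
  fixes par :: "'x::linorder \<Rightarrow> bool"
  assumes two: "(2::'k::field) \<noteq> 0" and ne: "rowsne ws1"
    and SK: "\<forall>i j. i \<le> j \<longrightarrow> j < length ws1 \<longrightarrow> rkey (ws1 ! j) \<le> rkey (ws1 ! i)"
    and L: "length c = Suc (length (chn ws1))" and px: "par x" and cnt: "2 \<le> count (mset c) x"
    and N: "N = tlen (form x0 ws1)" and r: "r = length ws1" and HH: "Hi N r \<subseteq> H"
  shows "inspan par H [(1::'k, ff c ws1)]"
proof -
  let ?rest = "remove1 x (remove1 x c)"
  let ?d = "x # x # ?rest"
  have md: "mset c = mset ?d" using mset_two[OF cnt] by simp
  have e: "eqv par (Hi N r) (ff c ws1) (ff ?d ws1) TYPE('k)" by (rule perm_flat[OF ne N r L md])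
  have Ld: "length ?d = Suc (length (chn ws1))" using L md by (metis mset_eq_length)
  have "2 \<le> length c" using cnt count_le_length[of c x] by linarith
  then have "chn ws1 \<noteq> []" using L by auto
  then obtain k where k: "k < length ws1" "butlast (ws1 ! k) \<noteq> []"
    unfolding chn_def by (metis concat_eq_Nil_conv in_set_conv_nth list.set_map imageE)
  obtain w0 ws1' where ws1: "ws1 = w0 # ws1'" using k by (cases ws1) auto
  have "length (ws1 ! k) \<le> length (ws1 ! 0)" using SK k(1) rkey_le by blast
  moreover have "2 \<le> length (ws1 ! k)"
  proof -
    have "0 < length (butlast (ws1 ! k))" using k(2) by blast
    then show ?thesis by simp
  qed
  ultimately have lw0: "2 \<le> length w0" using ws1 by simp
  obtain m where m: "length w0 - 1 = Suc m" using lw0 by (cases "length w0 - 1") auto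
  let ?S = "take m ?rest @ [last w0]"
  let ?ws = "fill (drop (Suc m) (x # ?rest)) ws1'"
  have ffd: "ff ?d ws1 = form x ((x # ?S) # ?ws)"
    unfolding ff_def ws1 by (simp only: list.sel fill.simps m) simp
  have ne': "rowsne ws1'" using ne ws1 by simp
  have "length (drop (Suc m) (x # ?rest)) = length (chn ws1')" using Ld ws1 m lw0 by simp
  from fill_props[OF ne' this] have nws: "rowsne ?ws" by simp
  have N': "N = tlen (form x ((x # ?S) # ?ws))" using tlen_ff[OF ne Ld, of x0] N ffd by simp
  have r': "r = Suc (length ?ws)" using r ws1 by (simp add: fill_length)
  have Sne: "?S \<noteq> []" by simp
  have "inspan par H [(1::'k, form x ((x # ?S) # ?ws))]"
    by (rule zero4[where par=par and x=x, OF two nws Sne px N' r' HH])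
  then have "inspan par H [(1::'k, ff ?d ws1)]" by (simp only: ffd)
  then show ?thesis by (rule eqv_use[OF e _ HH])
qed

lemma caseB:
  fixes par :: "'x \<Rightarrow> bool"
  assumes two: "(2::'k::field) \<noteq> 0" and ne: "rowsne ws2" and i: "Suc i < length ws2"
    and le: "length (ws2 ! i) = length (ws2 ! Suc i)" and pc: "par (last (ws2 ! i))"
    and la: "last (ws2 ! i) = last (ws2 ! Suc i)"
    and N: "N = tlen (form a ws2)" and r: "r = length ws2" and HH: "Hi N r \<subseteq> H"
  shows "inspan par H [(1::'k, form a ws2)]"
proof -
  let ?u = "ws2 ! i" and ?v = "ws2 ! Suc i"
  let ?rest = "take i ws2 @ drop (Suc (Suc i)) ws2"
  have split: "ws2 = take i ws2 @ ?u # ?v # drop (Suc (Suc i)) ws2"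
    using i by (metis Cons_nth_drop_Suc Suc_lessD append_take_drop_id)
  have ms: "mset ws2 = mset (?u # ?v # ?rest)" by (subst (1) split) simp
  have e: "eqv par (Hi N r) (form a ws2) (form a (?u # ?v # ?rest)) TYPE('k)" by (rule row_perm[OF ms])
  have un: "?u \<noteq> []" "?v \<noteq> []" using ne i by auto
  have uu1: "?u = butlast ?u @ [last ?u]" using un(1) by simp
  have uu2: "?v = butlast ?v @ [last ?u]" using un(2) la by simp
  note uu = uu1 uu2
  have nr: "rowsne ?rest" using ne by (auto dest: in_set_takeD in_set_dropD)
  have N': "N = tlen (form a ((butlast ?u @ [last ?u]) # (butlast ?v @ [last ?u]) # ?rest))"
  proof -
    have "tlen (form a ((butlast ?u @ [last ?u]) # (butlast ?v @ [last ?u]) # ?rest)) = tlen (form a (?u # ?v # ?rest))"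
      using uu by simp
    also have "\<dots> = tlen (form a ws2)"
      using ne nr un by (intro tlen_form_eq) (auto simp: sum_length_mset[OF ms])
    finally show ?thesis using N by simp
  qed
  have r': "r = Suc (Suc (length ?rest))" using r i by simp
  have lPQ: "length (butlast ?u) = length (butlast ?v)" using le by simp
  have "inspan par H [(1::'k, form a ((butlast ?u @ [last ?u]) # (butlast ?v @ [last ?u]) # ?rest))]"
    by (rule zero5[where par=par and c="last ?u", OF two nr pc lPQ N' r' HH])
  then have "inspan par H [(1::'k, form a (?u # ?v # ?rest))]" using uu by simp
  then show ?thesis by (rule eqv_use[OF e _ HH])
qed

lemma tabcase:
  fixes par :: "'x::linorder \<Rightarrow> bool"
  assumes ne: "rowsne ws1"
    and SK: "\<forall>i j. i \<le> j \<longrightarrow> j < length ws1 \<longrightarrow> rkey (ws1 ! j) \<le> rkey (ws1 ! i)"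
    and Ld: "length d = Suc (length (chn ws1))"
    and sd: "\<forall>j. Suc j < length d \<longrightarrow> d ! Suc j \<le> d ! j"
    and nodup: "\<forall>x. par x \<longrightarrow> count (mset d) x < 2"
    and nov: "\<not> (\<exists>i. Suc i < length (fill (tl d) ws1) \<and> length (fill (tl d) ws1 ! i) = length (fill (tl d) ws1 ! Suc i)
               \<and> par (last (fill (tl d) ws1 ! i)) \<and> last (fill (tl d) ws1 ! i) = last (fill (tl d) ws1 ! Suc i))"
  shows "is_tableau par (form (hd d) (fill (tl d) ws1))"
proof -
  define ws2 where "ws2 = fill (tl d) ws1"
  have L': "length (tl d) = length (chn ws1)" using Ld by simp
  note fp = fill_props[OF ne L']
  have c2: "chn ws2 = tl d" and ml: "map length ws2 = map length ws1" and mla: "map last ws2 = map last ws1"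
    and ne2: "rowsne ws2" using fp by (simp_all add: ws2_def)
  have len2: "length ws2 = length ws1" by (simp add: ws2_def fill_length)
  have lenI: "length (ws2 ! i) = length (ws1 ! i)" if "i < length ws1" for i
    using ml that len2 by (metis nth_map)
  have lastI: "last (ws2 ! i) = last (ws1 ! i)" if "i < length ws1" for i
    using mla that len2 by (metis nth_map)
  have dne: "d \<noteq> []" using Ld by auto
  have ch: "hd d # concat (map butlast ws2) = d" using c2 dne by (simp add: chn_def)
  show ?thesis
    unfolding is_tableau_def Let_def ws2_def[symmetric]
  proof (intro exI[of _ "hd d"] exI[of _ ws2] conjI allI impI)
    show "form (hd d) ws2 = lnest (hd d) (map rnest ws2)" by (simp add: form_def)
  next
    fix i assume "i < length ws2" then show "ws2 ! i \<noteq> []" using ne2 by simp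
  next
    fix i assume i: "Suc i < length ws2"
    then have "rkey (ws1 ! Suc i) \<le> rkey (ws1 ! i)" using SK len2 by simp
    then have "length (ws1 ! Suc i) \<le> length (ws1 ! i)" using rkey_le by blast
    then show "length (ws2 ! Suc i) \<le> length (ws2 ! i)" using lenI i len2 by simp
  next
    fix i assume i: "Suc i < length ws2" and eq: "length (ws2 ! i) = length (ws2 ! Suc i)"
    have "rkey (ws1 ! Suc i) \<le> rkey (ws1 ! i)" using SK len2 i by simp
    then show "last (ws2 ! Suc i) \<le> last (ws2 ! i)" using rkey_le[of "ws1 ! Suc i" "ws1 ! i"] lenI lastI i len2 eq by simp
  next
    fix j assume "Suc j < length (hd d # concat (map butlast ws2))"
    then show "(hd d # concat (map butlast ws2)) ! Suc j \<le> (hd d # concat (map butlast ws2)) ! j"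
      using sd ch by simp
  next
    fix i j assume i: "i < length (hd d # concat (map butlast ws2))" and j: "j < length (hd d # concat (map butlast ws2))"
      and ij: "i \<noteq> j" and pi: "par ((hd d # concat (map butlast ws2)) ! i)" and pj: "par ((hd d # concat (map butlast ws2)) ! j)"
    show "(hd d # concat (map butlast ws2)) ! i \<noteq> (hd d # concat (map butlast ws2)) ! j"
    proof
      assume eq: "(hd d # concat (map butlast ws2)) ! i = (hd d # concat (map butlast ws2)) ! j"
      have "2 \<le> count (mset d) (d ! i)" using i j ij eq unfolding ch by (intro count_two[of i d j]) auto
      moreover have "par (d ! i)" using pi unfolding ch .
      ultimately show False using nodup by fastforce
    qed
  next
    fix i assume i: "Suc i < length ws2" and p1: "par (last (ws2 ! i))" and p2: "par (last (ws2 ! Suc i))"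
      and eq: "length (ws2 ! i) = length (ws2 ! Suc i)"
    show "last (ws2 ! i) \<noteq> last (ws2 ! Suc i)" using nov i p1 eq unfolding ws2_def by blast
  qed
qed

lemma ord_main:
  fixes par :: "'x::linorder \<Rightarrow> bool"
  assumes two: "(2::'k::field) \<noteq> 0"
    and HH: "Hi N r \<subseteq> H" and HT: "\<And>\<mu>. is_tableau par \<mu> \<Longrightarrow> tlen \<mu> = N \<Longrightarrow> r \<le> root \<mu> \<Longrightarrow> \<mu> \<in> H"
    and ne: "rowsne ws" and Lr: "length ws = r" and T: "tlen (form a ws) = N"
  shows "inspan par H [(1::'k, form a ws)]"
proof -
  obtain ws1 where m1: "mset ws1 = mset ws" and SK: "\<forall>i j. i \<le> j \<longrightarrow> j < length ws1 \<longrightarrow> rkey (ws1 ! j) \<le> rkey (ws1 ! i)"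
    using sort_rows by blast
  have ne1: "rowsne ws1" using ne m1 by (metis set_mset_mset)
  have r1: "r = length ws1" using Lr m1 by (metis mset_eq_length)
  have e1: "eqv par (Hi N r) (form a ws) (form a ws1) TYPE('k)" by (rule row_perm) (use m1 in simp)
  have N1: "N = tlen (form a ws1)" using T ne ne1 by (metis tlen_form_eq sum_length_mset m1)
  let ?c = "a # chn ws1"
  have Lc: "length ?c = Suc (length (chn ws1))" by simp
  have ffc: "ff ?c ws1 = form a ws1" using ne1 by (simp add: ff_def fill_chn)
  have main: "inspan par H [(1::'k, ff ?c ws1)]"
  proof (cases "\<exists>x. par x \<and> 2 \<le> count (mset ?c) x")
    case True
    then obtain x where "par x" "2 \<le> count (mset ?c) x" by blast
    then show ?thesis by (rule caseA[OF two ne1 SK Lc _ _ N1 r1 HH])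
  next
    case False
    define d where "d = rev (sort ?c)"
    have md: "mset ?c = mset d" by (simp add: d_def)
    have e2: "eqv par (Hi N r) (ff ?c ws1) (ff d ws1) TYPE('k)" by (rule perm_flat[OF ne1 N1 r1 Lc md])
    have Ld: "length d = Suc (length (chn ws1))" by (simp add: d_def)
    have sd: "\<forall>j. Suc j < length d \<longrightarrow> d ! Suc j \<le> d ! j"
    proof (intro allI impI)
      fix j assume j: "Suc j < length d"
      let ?s = "sort ?c"
      have ls: "length ?s = length d" by (simp add: d_def)
      have "d ! Suc j = ?s ! (length ?s - Suc (Suc j))" "d ! j = ?s ! (length ?s - Suc j)"
        using j ls unfolding d_def by (auto simp: rev_nth)
      moreover have "?s ! (length ?s - Suc (Suc j)) \<le> ?s ! (length ?s - Suc j)"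
        using j ls by (intro sorted_nth_mono[OF sorted_sort[of ?c]]) auto
      ultimately show "d ! Suc j \<le> d ! j" by simp
    qed
    have nodup: "\<forall>x. par x \<longrightarrow> count (mset d) x < 2" using False md by (metis not_le)
    define ws2 where "ws2 = fill (tl d) ws1"
    have L': "length (tl d) = length (chn ws1)" using Ld by simp
    have ne2: "rowsne ws2" using fill_props[OF ne1 L'] by (simp add: ws2_def)
    have ffd: "ff d ws1 = form (hd d) ws2" by (simp add: ff_def ws2_def)
    have N2: "N = tlen (form (hd d) ws2)" using tlen_ff[OF ne1 Ld, of a] N1 ffd by simp
    have r2: "r = length ws2" using r1 by (simp add: ws2_def fill_length)
    have "inspan par H [(1::'k, form (hd d) ws2)]"
    proof (cases "\<exists>i. Suc i < length ws2 \<and> length (ws2 ! i) = length (ws2 ! Suc i)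
               \<and> par (last (ws2 ! i)) \<and> last (ws2 ! i) = last (ws2 ! Suc i)")
      case True
      then obtain i where i: "Suc i < length ws2" "length (ws2 ! i) = length (ws2 ! Suc i)"
        "par (last (ws2 ! i))" "last (ws2 ! i) = last (ws2 ! Suc i)" by blast
      show ?thesis by (rule caseB[where par=par, OF two ne2 i N2 r2 HH])
    next
      case False
      have "is_tableau par (form (hd d) (fill (tl d) ws1))"
        by (rule tabcase[OF ne1 SK Ld sd nodup]) (use False in \<open>simp add: ws2_def\<close>)
      then have "is_tableau par (form (hd d) ws2)" by (simp add: ws2_def)
      moreover have "root (form (hd d) ws2) = r" using root_form[OF ne2] r2 by simp
      ultimately have "form (hd d) ws2 \<in> H" using HT N2 by simp
      then show ?thesis by (rule inspan_mem)
    qed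
    then have "inspan par H [(1::'k, ff d ws1)]" by (simp add: ffd)
    then show ?thesis by (rule eqv_use[OF e2 _ HH])
  qed
  then have "inspan par H [(1::'k, form a ws1)]" by (simp add: ffc)
  then show ?thesis by (rule eqv_use[OF e1 _ HH])
qed

definition TB :: "('x::linorder \<Rightarrow> bool) \<Rightarrow> nat \<Rightarrow> nat \<Rightarrow> 'x gterm set" where
  "TB par N r = {\<mu>. \<mu> \<in> Tab par \<and> tlen \<mu> = N \<and> r \<le> root \<mu>}"

lemma tab_form: "is_tableau par \<mu> \<Longrightarrow> \<exists>c zs. \<mu> = form c zs \<and> rowsne zs"
  unfolding is_tableau_def form_def by (metis in_set_conv_nth)

lemma form_snoc: "form a (xs @ [w]) = Mul (form a xs) (rnest w)"
  by (simp add: form_def lnest_def)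

lemma form_nil: "form a [] = Letter a"
  by (simp add: form_def lnest_def)

lemma forms_ge:
  fixes par :: "'x::linorder \<Rightarrow> bool"
  assumes two: "(2::'k::field) \<noteq> 0"
    and HH: "Hi N r \<subseteq> H" and HT: "\<And>\<mu>. is_tableau par \<mu> \<Longrightarrow> tlen \<mu> = N \<Longrightarrow> r \<le> root \<mu> \<Longrightarrow> \<mu> \<in> H"
    and ne: "rowsne ws" and Lr: "r \<le> length ws" and T: "tlen (form a ws) = N"
  shows "inspan par H [(1::'k, form a ws)]"
proof (cases "r < length ws")
  case True
  then have "form a ws \<in> Hi N r" using T root_form[OF ne] by (simp add: Hi_def)
  then show ?thesis using HH by (intro inspan_mem) auto
next
  case False
  then have "length ws = r" using Lr by simp
  then show ?thesis using ord_main[OF two HH HT ne _ T] by blast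
qed

lemma prod_lemma:
  fixes par :: "'x::linorder \<Rightarrow> bool"
  assumes two: "(2::'k::field) \<noteq> 0"
    and HH: "Hi N r \<subseteq> H" and HT: "\<And>\<mu>. is_tableau par \<mu> \<Longrightarrow> tlen \<mu> = N \<Longrightarrow> r \<le> root \<mu> \<Longrightarrow> \<mu> \<in> H"
    and IHs: "\<And>u. tlen u < N \<Longrightarrow> inspan par (TB par (tlen u) (root u)) [(1::'k, u)]"
    and nx: "rowsne xs" and ny: "rowsne ys"
    and T: "tlen (Mul (form a xs) (form b ys)) = N" and R: "r \<le> root (Mul (form a xs) (form b ys))"
  shows "inspan par H [(1::'k, Mul (form a xs) (form b ys))]"
proof -
  have FG: "inspan par H [(1::'k, form c zs)]" if "rowsne zs" "r \<le> length zs" "tlen (form c zs) = N" for c zs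
    by (rule forms_ge[OF two HH HT that])
  have tabF: "\<exists>c zs. \<tau> = form c zs \<and> rowsne zs \<and> root \<tau> = length zs" if "\<tau> \<in> TB par M s" for \<tau> M s
  proof -
    from that have "is_tableau par \<tau>" by (simp add: TB_def Tab_def)
    from tab_form[OF this] obtain c zs where cz: "\<tau> = form c zs" "rowsne zs" by blast
    then have "root \<tau> = length zs" using root_form[OF cz(2)] by simp
    then show ?thesis using cz by blast
  qed
  have rx: "root (form a xs) = length xs" by (rule root_form[OF nx])
  have ry: "root (form b ys) = length ys" by (rule root_form[OF ny])
  show ?thesis
  proof (cases "ys = []")
    case True
    have "Mul (form a xs) (form b ys) = form a (xs @ [[b]])" using True by (simp add: form_snoc form_nil)
    moreover have "inspan par H [(1::'k, form a (xs @ [[b]]))]"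
    proof (rule FG)
      show "r \<le> length (xs @ [[b]])" using R True rx by (simp add: root_Mul form_nil)
      show "tlen (form a (xs @ [[b]])) = N" using T True by (simp add: form_snoc form_nil)
    qed (use nx in auto)
    ultimately show ?thesis by simp
  next
    case ysne: False
    show ?thesis
    proof (cases "xs = []")
      case False
      then obtain xs' \<mu> where xs: "xs = xs' @ [\<mu>]" by (metis rev_exhaust)
      have nx': "rowsne xs'" and m: "\<mu> \<noteq> []" using nx xs by auto
      let ?x' = "form a xs'" and ?m = "rnest \<mu>" and ?y = "form b ys"
      have x: "form a xs = Mul ?x' ?m" by (simp add: xs form_snoc)
      have r1: "gdn_rel par [(1::'k, Mul (Mul ?x' ?m) ?y), (- sgn2 par ?m ?y, Mul (Mul ?x' ?y) ?m)]"
        by (rule gdn_rel.ident2)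
      have mh1: "mh par {} (Mul (Mul ?x' ?m) ?y) (- (- sgn2 par ?m ?y) :: 'k) (Mul (Mul ?x' ?y) ?m)"
        by (rule mh_of_rel[OF r1]) simp
      have tl1: "tlen (Mul ?x' ?y) < N"
      proof -
        have "N = tlen ?x' + tlen ?m + tlen ?y" using T x by simp
        then show ?thesis using tlen_pos[of ?m] by simp
      qed
      have sp: "inspan par (TB par (tlen (Mul ?x' ?y)) (root (Mul ?x' ?y))) [(1::'k, Mul ?x' ?y)]" by (rule IHs[OF tl1])
      have "inspan par H [(1::'k, Mul (Mul ?x' ?y) ?m)]"
      proof (rule inspan_ctx_single[OF ctx_r[OF ctx_id] sp])
        fix \<tau> assume "\<tau> \<in> TB par (tlen (Mul ?x' ?y)) (root (Mul ?x' ?y))"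
        moreover from tabF[OF this] obtain c zs where tz: "\<tau> = form c zs" "rowsne zs" "root \<tau> = length zs" by blast
        ultimately have tt: "tlen \<tau> = tlen (Mul ?x' ?y)" "root (Mul ?x' ?y) \<le> length zs" by (auto simp: TB_def)
        have "Mul \<tau> ?m = form c (zs @ [\<mu>])" using tz by (simp add: form_snoc)
        moreover have "inspan par H [(1::'k, form c (zs @ [\<mu>]))]"
        proof (rule FG)
          show "rowsne (zs @ [\<mu>])" using tz m by auto
          have rx': "root (form a xs) = Suc (length xs')" using rx xs by simp
          have "root (Mul (form a xs) ?y) = Suc (length xs') + max 1 (length ys)"
            by (simp only: root_Mul rx' ry)
          moreover have "root (Mul ?x' ?y) = length xs' + max 1 (length ys)"
            by (simp add: root_Mul root_form[OF nx'] ry)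
          ultimately show "r \<le> length (zs @ [\<mu>])" using R tt by simp
          show "tlen (form c (zs @ [\<mu>])) = N" using tt tz T x by (simp add: form_snoc)
        qed
        ultimately show "inspan par H [(1::'k, Mul \<tau> ?m)]" by simp
      qed
      then have "inspan par H [(1::'k, Mul (Mul ?x' ?m) ?y)]" by (rule mh_use[OF mh1]) simp
      then show ?thesis by (simp add: x)
    next
      case True
      obtain ys' s where ys: "ys = ys' @ [s]" using ysne by (metis rev_exhaust)
      have ny': "rowsne ys'" and sne: "s \<noteq> []" using ny ys by auto
      let ?w = "form b ys'" and ?z = "rnest s"
      have y: "form b ys = Mul ?w ?z" by (simp add: ys form_snoc)
      have x: "form a xs = Letter a" by (simp add: True form_nil)
      let ?s1 = "sgn2 par (Letter a) ?w :: 'k"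
      have r1: "gdn_rel par [(1::'k, Mul (Letter a) (Mul ?w ?z)), (-1, Mul (Mul (Letter a) ?w) ?z),
          (- ?s1, Mul ?w (Mul (Letter a) ?z)), (?s1, Mul (Mul ?w (Letter a)) ?z)]"
        by (rule gdn_rel.ident1)
      have rootxy: "root (Mul (form a xs) (form b ys)) = length ys"
      proof -
        have "length ys \<ge> 1" using ysne by (cases ys) auto
        then show ?thesis by (simp add: x root_Mul ry)
      qed
      have Tw: "tlen ?w + tlen ?z + 1 = N" using T x y by simp
      have tl1: "tlen (Mul (Letter a) ?w) < N" using Tw tlen_pos[of ?z] by simp
      have sp: "inspan par (TB par (tlen (Mul (Letter a) ?w)) (root (Mul (Letter a) ?w))) [(1::'k, Mul (Letter a) ?w)]"
        by (rule IHs[OF tl1])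
      have A1: "inspan par H [(1::'k, Mul (Mul (Letter a) ?w) ?z)]"
      proof (rule inspan_ctx_single[OF ctx_r[OF ctx_id] sp])
        fix \<tau> assume "\<tau> \<in> TB par (tlen (Mul (Letter a) ?w)) (root (Mul (Letter a) ?w))"
        moreover from tabF[OF this] obtain c zs where tz: "\<tau> = form c zs" "rowsne zs" "root \<tau> = length zs" by blast
        ultimately have tt: "tlen \<tau> = tlen (Mul (Letter a) ?w)" "root (Mul (Letter a) ?w) \<le> length zs" by (auto simp: TB_def)
        have "Mul \<tau> ?z = form c (zs @ [s])" using tz by (simp add: form_snoc)
        moreover have "inspan par H [(1::'k, form c (zs @ [s]))]"
        proof (rule FG)
          show "rowsne (zs @ [s])" using tz sne by auto
          have "root (Mul (Letter a) ?w) = max 1 (length ys')" by (simp add: root_Mul root_form[OF ny'])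
          then show "r \<le> length (zs @ [s])" using R tt rootxy ys by simp
          show "tlen (form c (zs @ [s])) = N" using tt tz Tw by (simp add: form_snoc)
        qed
        ultimately show "inspan par H [(1::'k, Mul \<tau> ?z)]" by simp
      qed
      have A2: "inspan par H [(1::'k, Mul ?w (Mul (Letter a) ?z))]"
      proof -
        have "Mul ?w (Mul (Letter a) ?z) = form b (ys' @ [a # s])" using sne by (simp add: form_snoc, cases s, auto)
        moreover have "inspan par H [(1::'k, form b (ys' @ [a # s]))]"
        proof (rule FG)
          show "rowsne (ys' @ [a # s])" using ny' by auto
          show "r \<le> length (ys' @ [a # s])" using R rootxy ys by simp
          have "tlen (form b (ys' @ [a # s])) = tlen ?w + Suc (length s)" by (simp add: form_snoc rnest_tlen)
          then show "tlen (form b (ys' @ [a # s])) = N" using Tw sne by (simp add: rnest_tlen)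
        qed
        ultimately show ?thesis by simp
      qed
      have A3: "inspan par H [(1::'k, Mul (Mul ?w (Letter a)) ?z)]"
      proof -
        have ee: "ys' @ [[a], s] = (ys' @ [[a]]) @ [s]" by simp
        have "Mul (Mul ?w (Letter a)) ?z = form b (ys' @ [[a], s])" unfolding ee form_snoc by simp
        moreover have "inspan par H [(1::'k, form b (ys' @ [[a], s]))]"
        proof (rule FG)
          show "rowsne (ys' @ [[a], s])" using ny' sne by auto
          show "r \<le> length (ys' @ [[a], s])" using R rootxy ys by simp
          have "tlen (form b (ys' @ [[a], s])) = tlen ?w + 1 + tlen ?z"
            unfolding ee form_snoc by simp
          then show "tlen (form b (ys' @ [[a], s])) = N" using Tw by simp
        qed
        ultimately show ?thesis by simp
      qed
      have "inspan par H ([(-1::'k, Mul (Mul (Letter a) ?w) ?z)] @ [(- ?s1, Mul ?w (Mul (Letter a) ?z))] @ [(?s1, Mul (Mul ?w (Letter a)) ?z)])"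
        using inspan_append[OF inspan_single[OF A1] inspan_append[OF inspan_single[OF A2] inspan_single[OF A3]]] .
      then have "inspan par H [(1::'k, Mul (Letter a) (Mul ?w ?z))]"
        by (intro inspan_solve[OF r1]) simp_all
      then show ?thesis by (simp add: x y)
    qed
  qed
qed

lemma tab_letter: "is_tableau par (Letter a)"
  unfolding is_tableau_def Let_def
  by (rule exI[of _ a], rule exI[of _ "[]"]) (auto simp: lnest_def)

lemma measure_lt: "(a::nat) < N \<Longrightarrow> a * a + (a - b) < N * N + (N - r)"
proof -
  assume "a < N"
  then have "a + 1 \<le> N" by simp
  then have "(a + 1) * (a + 1) \<le> N * N" using mult_le_mono by blast
  then show ?thesis by (simp add: algebra_simps)
qed

lemma main_span:
  fixes par :: "'x::linorder \<Rightarrow> bool"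
  assumes two: "(2::'k::field) \<noteq> 0"
  shows "inspan par (TB par (tlen t) (root t)) [(1::'k, t)]"
proof (induction t rule: measure_induct_rule[where f="\<lambda>t. tlen t * tlen t + (tlen t - root t)"])
  case (less t)
  define N where "N = tlen t"
  define r where "r = root t"
  define H where "H = Hi N r \<union> TB par N r"
  have IHs: "inspan par (TB par (tlen u) (root u)) [(1::'k, u)]" if "tlen u < N" for u
    by (rule less.IH) (use that measure_lt in \<open>simp add: N_def\<close>)
  have IHr: "inspan par (TB par N (root u)) [(1::'k, u)]" if "tlen u = N" "r < root u" for u
  proof -
    have "root u < tlen u" by (rule root_lt_tlen)
    then have "tlen u * tlen u + (tlen u - root u) < tlen t * tlen t + (tlen t - root t)"
      using that by (simp add: N_def r_def)
    from less.IH[OF this] show ?thesis using that(1) by simp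
  qed
  have HH: "Hi N r \<subseteq> H" by (simp add: H_def)
  have HT: "\<mu> \<in> H" if "is_tableau par \<mu>" "tlen \<mu> = N" "r \<le> root \<mu>" for \<mu>
    using that by (simp add: H_def TB_def Tab_def)
  have step: "inspan par H [(1::'k, t)]"
  proof (cases t)
    case (Letter a)
    have "t \<in> H" using HT[of t] tab_letter[of par a] Letter by (simp add: N_def r_def)
    then show ?thesis by (rule inspan_mem)
  next
    case (Mul u v)
    have tu: "tlen u < N" and tv: "tlen v < N" using Mul tlen_pos[of u] tlen_pos[of v] by (simp_all add: N_def)
    have spu: "inspan par (TB par (tlen u) (root u)) [(1::'k, u)]" by (rule IHs[OF tu])
    have spv: "inspan par (TB par (tlen v) (root v)) [(1::'k, v)]" by (rule IHs[OF tv])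
    have "inspan par H [(1::'k, Mul u v)]"
    proof (rule inspan_ctx_single[OF ctx_r[OF ctx_id] spu])
      fix x assume x: "x \<in> TB par (tlen u) (root u)"
      show "inspan par H [(1::'k, Mul x v)]"
      proof (rule inspan_ctx_single[OF ctx_l[OF ctx_id] spv])
        fix y assume y: "y \<in> TB par (tlen v) (root v)"
        from x have xt: "is_tableau par x" "tlen x = tlen u" "root u \<le> root x" by (auto simp: TB_def Tab_def)
        from y have yt: "is_tableau par y" "tlen y = tlen v" "root v \<le> root y" by (auto simp: TB_def Tab_def)
        obtain a xs where xf: "x = form a xs" "rowsne xs" using tab_form[OF xt(1)] by blast
        obtain b ys where yf: "y = form b ys" "rowsne ys" using tab_form[OF yt(1)] by blast
        have T: "tlen (Mul (form a xs) (form b ys)) = N" using xf yf xt yt Mul by (simp add: N_def)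
        have "root t = root u + max 1 (root v)" using Mul by (simp add: root_Mul)
        moreover have "root (Mul x y) = root x + max 1 (root y)" by (simp add: root_Mul)
        ultimately have R: "r \<le> root (Mul (form a xs) (form b ys))" using xt yt xf yf r_def by simp
        have "inspan par H [(1::'k, Mul (form a xs) (form b ys))]"
          by (rule prod_lemma[OF two HH HT IHs xf(2) yf(2) T R])
        then show "inspan par H [(1::'k, Mul x y)]" using xf yf by simp
      qed
    qed
    then show ?thesis using Mul by simp
  qed
  have "inspan par (TB par N r) [(1::'k, t)]"
  proof (rule inspan_trans[OF step])
    fix u assume "u \<in> H"
    then consider "u \<in> Hi N r" | "u \<in> TB par N r" unfolding H_def by blast
    then show "inspan par (TB par N r) [(1::'k, u)]"
    proof cases
      case 1
      then have "tlen u = N" "r < root u" by (auto simp: Hi_def)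
      from IHr[OF this] show ?thesis by (rule inspan_mono) (use \<open>r < root u\<close> in \<open>auto simp: TB_def\<close>)
    next
      case 2 then show ?thesis by (rule inspan_mem)
    qed
  qed
  then show ?case by (simp add: N_def r_def)
qed

theorem lemma2p10:
  fixes par :: "'x::wellorder \<Rightarrow> bool"
  assumes "(2::'k::field) \<noteq> 0"
  shows "(\<forall>lam::'x gterm. \<exists>L::('k \<times> 'x gterm) list.
            (\<forall>(\<alpha>, \<mu>) \<in> set L. \<mu> \<in> Tab par \<and> tlen \<mu> = tlen lam \<and> root \<mu> \<ge> root lam)
            \<and> gdn_eq par [(1, lam)] L)
       \<and> (\<forall>f::('k \<times> 'x gterm) list. \<exists>L::('k \<times> 'x gterm) list.
            (\<forall>(\<alpha>, \<mu>) \<in> set L. \<mu> \<in> Tab par) \<and> gdn_eq par f L)"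
proof (intro conjI allI)
  fix lam :: "'x gterm"
  from main_span[OF assms, of par lam] obtain M :: "('k \<times> 'x gterm) list"
    where M: "\<forall>p\<in>set M. snd p \<in> TB par (tlen lam) (root lam)" "gdn_eq par [(1, lam)] M"
    unfolding inspan_def by blast
  show "\<exists>L::('k \<times> 'x gterm) list.
            (\<forall>(\<alpha>, \<mu>) \<in> set L. \<mu> \<in> Tab par \<and> tlen \<mu> = tlen lam \<and> root \<mu> \<ge> root lam)
            \<and> gdn_eq par [(1, lam)] L"
    by (rule exI[of _ M]) (use M in \<open>auto simp: TB_def\<close>)
next
  fix f :: "('k \<times> 'x gterm) list"
  have "inspan par (Tab par) f"
  proof (induction f)
    case Nil then show ?case by simp
  next
    case (Cons p f)
    obtain c t where p: "p = (c, t)" by (cases p)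
    have "inspan par (Tab par) [(1::'k, t)]"
      using main_span[OF assms, of par t] by (rule inspan_mono) (auto simp: TB_def)
    then have "inspan par (Tab par) [(c, t)]" by (rule inspan_single)
    then show ?case unfolding p using Cons.IH by (rule inspan_cons)
  qed
  then obtain M where M: "\<forall>p\<in>set M. snd p \<in> Tab par" "gdn_eq par f M" unfolding inspan_def by blast
  show "\<exists>L::('k \<times> 'x gterm) list. (\<forall>(\<alpha>, \<mu>) \<in> set L. \<mu> \<in> Tab par) \<and> gdn_eq par f L"
    by (rule exI[of _ M]) (use M in \<open>auto simp: case_prod_unfold\<close>)
qed

end
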